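(* Consider the linear Boltzmann equation $\partial_tf+v\cdot\nabla_xf=Q(f,\mathcal{M})$ on $\mathbb{T}^d\times\mathbb{R}^d$ with $H(x,v):=|v|^2/2$, or $\partial_tf+v\cdot\nabla_xf-\nabla\Phi\cdot\nabla_vf=Q(f,\mathcal{M})$ on $\mathbb{R}^d\times\mathbb{R}^d$ with $\Phi\in\mathcal{C}^2$ bounded below and $H(x,v):=\Phi(x)+|v|^2/2$, with collision kernel $B(|v-v_*|,\sigma)=|v-v_*|^\gamma b(\cdot)$, $\gamma\ge0$, $b$ integrable. Let $E_0>0$, $E:=\{(x,v):H(x,v)\le E_0\}$, and let $f$ be the solution with initial datum $f_0=\delta_{(x_0,v_0)}$ where $H(x_0,v_0)\le E_0$. Then there is a constant $C_1>0$ (depending on $E_0$ but not on $(x_0,v_0)$) such that for all $t\ge0$ \[f(t,\cdot,\cdot)\ge e^{-tC_1}\int_0^t\int_0^sT_{t-s}\widetilde{\mathcal{L}}^+T_{s-r}\widetilde{\mathcal{L}}^+T_r(\mathbb{1}_Ef_0)\,\mathrm{d}r\,\mathrm{d}s,\qquad\widetilde{\mathcal{L}}^+g:=\mathbb{1}_E\mathcal{L}^+g,\] in the sense of measures.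
   Context: $\mathcal{M}(v)=(2\pi)^{-d/2}e^{-|v|^2/2}$. The linear Boltzmann operator splits as $Q(f,\mathcal{M})=\mathcal{L}^+f-\kappa(v)f$ with gain part $\mathcal{L}^+f(v)=\int_{\mathbb{R}^d}\int_{\mathbb{S}^{d-1}}B(|v-v_*|,\sigma)f(v')\mathcal{M}(v_*')\,\mathrm{d}\sigma\,\mathrm{d}v_*$ and collision frequency $\kappa(v)=\int\int B(|v-v_*|,\sigma)\mathcal{M}(v_* )\,\mathrm{d}\sigma\,\mathrm{d}v_*$, where $v'=\frac{v+v_*}{2}+\frac{|v-v_*|}{2}\sigma$, $v_*'=\frac{v+v_*}{2}-\frac{|v-v_*|}{2}\sigma$ (acting in $v$ for fixed $x$); $\kappa$ satisfies $0\le\kappa(v)\le C(1+|v|^2)^{\gamma/2}$. $(T_t)$ is the transport semigroup of $-v\cdot\nabla_x$ (resp. $-v\cdot\nabla_x+\nabla\Phi\cdot\nabla_v$), i.e. push-forward by the corresponding characteristic flow. *)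

theory Defs
  imports "HOL-Analysis.Analysis" "HOL-Probability.Probability"
begin

type_synonym ('d) state = "(real^'d) \<times> (real^'d)"

definition maxwellian :: "real^'d \<Rightarrow> real" where
  "maxwellian v = (2 * pi) powr (- real CARD('d) / 2) * exp (- (norm v)\<^sup>2 / 2)"

text \<open>Surface measure on the unit sphere (as a measure on the ambient space):
  d times the push-forward of Lebesgue measure on the unit ball under x to x/|x|.\<close>
definition sphere_measure :: "(real^'d) measure" where
  "sphere_measure = density (distr (density lborel (indicator (ball 0 1))) borel sgn)
                            (\<lambda>_. ennreal (real CARD('d)))"

definition post_vel :: "real^'d \<Rightarrow> real^'d \<Rightarrow> real^'d \<Rightarrow> real^'d" where
  "post_vel v vs \<sigma> = (1/2) *\<^sub>R (v + vs) + (norm (v - vs) / 2) *\<^sub>R \<sigma>"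

definition kernel :: "real \<Rightarrow> (real \<Rightarrow> real) \<Rightarrow> real^'d \<Rightarrow> real^'d \<Rightarrow> real^'d \<Rightarrow> real" where
  "kernel \<gamma> b v vs \<sigma> = norm (v - vs) powr \<gamma> * b (\<sigma> \<bullet> sgn (v - vs))"

definition coll_freq :: "real \<Rightarrow> (real \<Rightarrow> real) \<Rightarrow> real^'d \<Rightarrow> real" where
  "coll_freq \<gamma> b v = enn2real (\<integral>\<^sup>+ vs. \<integral>\<^sup>+ \<sigma>. ennreal (kernel \<gamma> b v vs \<sigma> * maxwellian vs)
        \<partial>sphere_measure \<partial>lborel)"

text \<open>Gain operator L+ acting on measures on (position x velocity), via its weak form
  int phi d(L+ mu) = int int int B(|w-w*|,sigma) M(w*) phi(x,w') dsigma dw* dmu(x,w).\<close>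
definition gain :: "real \<Rightarrow> (real \<Rightarrow> real) \<Rightarrow> ('d::finite) state measure \<Rightarrow> ('d::finite) state measure" where
  "gain \<gamma> b \<mu> = measure_of UNIV (sets borel)
     (\<lambda>A. \<integral>\<^sup>+ z. \<integral>\<^sup>+ vs. \<integral>\<^sup>+ \<sigma>. ennreal (kernel \<gamma> b (snd z) vs \<sigma> * maxwellian vs)
              * indicator A (fst z, post_vel (snd z) vs \<sigma>) \<partial>sphere_measure \<partial>lborel \<partial>\<mu>)"

definition transport :: "(real \<Rightarrow> ('d::finite) state \<Rightarrow> ('d::finite) state) \<Rightarrow> real \<Rightarrow> ('d::finite) state measure \<Rightarrow> ('d::finite) state measure" where
  "transport Fl t \<mu> = distr \<mu> borel (Fl t)"

text \<open>Damped transport semigroup generated by the transport operator minus kappa.\<close>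
definition damped :: "(real \<Rightarrow> ('d::finite) state \<Rightarrow> ('d::finite) state) \<Rightarrow> (real^'d \<Rightarrow> real) \<Rightarrow> real \<Rightarrow> ('d::finite) state measure \<Rightarrow> ('d::finite) state measure" where
  "damped Fl \<kappa> t \<mu> = distr (density \<mu> (\<lambda>z. ennreal (exp (- enn2real
       (\<integral>\<^sup>+ \<tau>. ennreal (\<kappa> (snd (Fl \<tau> z))) * indicator {0..t} \<tau> \<partial>lborel))))) borel (Fl t)"

definition restr :: "('d::finite) state set \<Rightarrow> ('d::finite) state measure \<Rightarrow> ('d::finite) state measure" where
  "restr E \<mu> = density \<mu> (indicator E)"

text \<open>(Nonnegative, measure-valued) mild solution of the linear Boltzmann equation
  d_t f + (transport) f = L+ f - kappa f with initial datum mu0 (Duhamel formula).\<close>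
definition mild_solution :: "(real \<Rightarrow> ('d::finite) state \<Rightarrow> ('d::finite) state) \<Rightarrow> real \<Rightarrow> (real \<Rightarrow> real)
     \<Rightarrow> ('d::finite) state measure \<Rightarrow> (real \<Rightarrow> ('d::finite) state measure) \<Rightarrow> bool" where
  "mild_solution Fl \<gamma> b \<mu>0 f \<longleftrightarrow> (\<forall>t\<ge>0. sets (f t) = sets borel \<and>
     (\<forall>A\<in>sets borel. emeasure (f t) A =
        emeasure (damped Fl (coll_freq \<gamma> b) t \<mu>0) A
        + (\<integral>\<^sup>+ s. emeasure (damped Fl (coll_freq \<gamma> b) (t - s) (gain \<gamma> b (f s))) A
               * indicator {0..t} s \<partial>lborel)))"

text \<open>Torus T^d = R^d / Z^d represented by the fundamental domain [0,1)^d.\<close>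
definition torus_box :: "(real^'d) set" where
  "torus_box = {x. \<forall>i. 0 \<le> x $ i \<and> x $ i < 1}"

definition torus_flow :: "real \<Rightarrow> ('d::finite) state \<Rightarrow> ('d::finite) state" where
  "torus_flow t z = ((\<chi> i. frac (fst z $ i + t * snd z $ i)), snd z)"

text \<open>The two settings: free transport on the torus, or Hamiltonian flow with a C^2 potential
  bounded below on R^d.  S is the phase space, Fl the characteristic flow, H the Hamiltonian.\<close>
definition kinetic_setting :: "('d::finite) state set \<Rightarrow> (real \<Rightarrow> ('d::finite) state \<Rightarrow> ('d::finite) state) \<Rightarrow> (('d::finite) state \<Rightarrow> real) \<Rightarrow> bool" where
  "kinetic_setting S Fl H \<longleftrightarrow>
     (S = torus_box \<times> UNIV \<and> Fl = torus_flow \<and> H = (\<lambda>z. (norm (snd z))\<^sup>2 / 2)) \<or>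
     (S = UNIV \<and>
      (\<exists>(\<Phi> :: real^'d \<Rightarrow> real) grad D2.
         (\<forall>x. (\<Phi> has_derivative (\<lambda>h. grad x \<bullet> h)) (at x)) \<and>
         (\<forall>x. (grad has_derivative blinfun_apply (D2 x)) (at x)) \<and>
         continuous_on UNIV D2 \<and>
         (\<exists>m. \<forall>x. m \<le> \<Phi> x) \<and>
         H = (\<lambda>z. \<Phi> (fst z) + (norm (snd z))\<^sup>2 / 2) \<and>
         (\<forall>z. Fl 0 z = z) \<and>
         (\<forall>z t. ((\<lambda>\<tau>. Fl \<tau> z) has_vector_derivative (snd (Fl t z), - grad (fst (Fl t z)))) (at t))))"

end

theory Submission
  imports Defs
begin

lemma sets_sphere[simp, measurable_cong]: "sets (sphere_measure :: (real^'d) measure) = sets borel"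
  by (simp add: sphere_measure_def)

lemma space_sphere[simp]: "space (sphere_measure :: (real^'d) measure) = UNIV"
  by (simp add: sphere_measure_def)

lemma finite_sphere: "finite_measure (sphere_measure :: (real^'d) measure)"
proof
  let ?D = "distr (density lborel (indicator (ball (0::real^'d) 1))) borel sgn"
  have "emeasure (sphere_measure :: (real^'d) measure) UNIV
      = (\<integral>\<^sup>+ x. ennreal (real CARD('d)) \<partial>?D)"
    unfolding sphere_measure_def by (subst emeasure_density) auto
  also have "\<dots> = ennreal (real CARD('d)) * emeasure ?D UNIV"
    by (simp add: nn_integral_const)
  also have "emeasure ?D UNIV = emeasure lborel (ball (0::real^'d) 1)"
  proof -
    have "emeasure ?D UNIV = emeasure (density lborel (indicator (ball (0::real^'d) 1))) UNIV"
      by (subst emeasure_distr) auto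
    also have "\<dots> = (\<integral>\<^sup>+ x. indicator (ball (0::real^'d) 1) x \<partial>lborel)"
      by (subst emeasure_density) (auto intro: borel_measurable_indicator)
    finally show ?thesis by simp
  qed
  finally have "emeasure (sphere_measure :: (real^'d) measure) UNIV = ennreal (real CARD('d)) * emeasure lborel (ball (0::real^'d) 1)" .
  also have "\<dots> < \<infinity>"
    using emeasure_lborel_ball_finite[of "0::real^'d" 1] by (simp add: ennreal_mult_less_top)
  finally show "emeasure (sphere_measure :: (real^'d) measure) (space sphere_measure) \<noteq> \<infinity>" by simp
qed

lemma sf_sphere: "sigma_finite_measure (sphere_measure :: (real^'d) measure)"
  using finite_sphere finite_measure.sigma_finite_measure by blast

lemma sgn_meas[measurable]: "(sgn :: real^'d \<Rightarrow> real^'d) \<in> borel_measurable borel"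
proof -
  have "sgn = (\<lambda>x::real^'d. inverse (norm x) *\<^sub>R x)" by (auto simp: sgn_div_norm divide_inverse_commute)
  moreover have "(\<lambda>x::real^'d. inverse (norm x) *\<^sub>R x) \<in> borel_measurable borel" by measurable
  ultimately show ?thesis by simp
qed

lemma kernel_meas[measurable (raw)]:
  assumes [measurable]: "b \<in> borel_measurable borel"
    and [measurable]: "f \<in> borel_measurable M" "g \<in> borel_measurable M" "k \<in> borel_measurable M"
  shows "(\<lambda>x. kernel \<gamma> b (f x :: real^'d) (g x) (k x)) \<in> borel_measurable M"
  unfolding kernel_def by measurable

lemma maxwellian_meas[measurable]: "maxwellian \<in> borel_measurable borel"
  unfolding maxwellian_def by measurable

lemma post_vel_meas[measurable (raw)]:
  assumes [measurable]: "f \<in> borel_measurable M" "g \<in> borel_measurable M" "k \<in> borel_measurable M"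
  shows "(\<lambda>x. post_vel (f x :: real^'d) (g x) (k x)) \<in> borel_measurable M"
  unfolding post_vel_def by measurable

lemma pair_borel_meas[measurable (raw)]:
  assumes "f \<in> borel_measurable M" "g \<in> borel_measurable M"
  shows "(\<lambda>x. (f x :: 'a::second_countable_topology, g x :: 'b::second_countable_topology)) \<in> borel_measurable M"
proof -
  have "(\<lambda>x. (f x, g x)) \<in> measurable M (borel \<Otimes>\<^sub>M borel)" using assms by measurable
  then show ?thesis by (simp add: borel_prod)
qed

lemma fst_borel_meas[measurable]: "(fst :: 'a::second_countable_topology \<times> 'b::second_countable_topology \<Rightarrow> 'a) \<in> borel_measurable borel"
  by (intro borel_measurable_continuous_onI continuous_intros)
lemma snd_borel_meas[measurable]: "(snd :: 'a::second_countable_topology \<times> 'b::second_countable_topology \<Rightarrow> 'b) \<in> borel_measurable borel"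
  by (intro borel_measurable_continuous_onI continuous_intros)

definition KM :: "real \<Rightarrow> (real \<Rightarrow> real) \<Rightarrow> real^'d \<Rightarrow> real^'d \<Rightarrow> real^'d \<Rightarrow> ennreal" where
  "KM \<gamma> b v vs \<sigma> = ennreal (kernel \<gamma> b v vs \<sigma> * maxwellian vs)"

definition PsiF :: "real \<Rightarrow> (real \<Rightarrow> real) \<Rightarrow> (('d::finite) state \<Rightarrow> ennreal) \<Rightarrow> ('d::finite) state \<Rightarrow> ennreal" where
  "PsiF \<gamma> b h z = (\<integral>\<^sup>+ vs. \<integral>\<^sup>+ \<sigma>. KM \<gamma> b (snd z) vs \<sigma> * h (fst z, post_vel (snd z) vs \<sigma>) \<partial>sphere_measure \<partial>lborel)"

lemma KM_meas[measurable (raw)]: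
  assumes [measurable]: "b \<in> borel_measurable borel"
    and [measurable]: "f \<in> borel_measurable M" "g \<in> borel_measurable M" "k \<in> borel_measurable M"
  shows "(\<lambda>x. KM \<gamma> b (f x :: real^'d) (g x) (k x)) \<in> borel_measurable M"
  unfolding KM_def by measurable

lemma PsiF_meas:
  fixes g :: "'p \<Rightarrow> ('d::finite) state"
  assumes [measurable]: "b \<in> borel_measurable borel"
    and hm[measurable]: "case_prod h \<in> borel_measurable (N \<Otimes>\<^sub>M borel)"
    and [measurable]: "g \<in> borel_measurable N"
  shows "(\<lambda>p. PsiF \<gamma> b (h p) (g p)) \<in> borel_measurable N"
proof -
  interpret S: sigma_finite_measure "sphere_measure :: (real^'d) measure" by (rule sf_sphere)
  have m1: "(\<lambda>((p, vs), \<sigma>). KM \<gamma> b (snd (g p)) vs \<sigma> * h p (fst (g p), post_vel (snd (g p)) vs \<sigma>))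
      \<in> borel_measurable ((N \<Otimes>\<^sub>M lborel) \<Otimes>\<^sub>M sphere_measure)"
  proof -
    have "(\<lambda>x. h (fst (fst x)) (fst (g (fst (fst x))), post_vel (snd (g (fst (fst x)))) (snd (fst x)) (snd x)))
      \<in> borel_measurable ((N \<Otimes>\<^sub>M lborel) \<Otimes>\<^sub>M sphere_measure)"
    proof -
      have "(\<lambda>x. (fst (fst x), (fst (g (fst (fst x))), post_vel (snd (g (fst (fst x)))) (snd (fst x)) (snd x))))
         \<in> measurable ((N \<Otimes>\<^sub>M lborel) \<Otimes>\<^sub>M sphere_measure) (N \<Otimes>\<^sub>M borel)" by measurable
      from measurable_comp[OF this hm] show ?thesis by (simp add: o_def)
    qed
    then show ?thesis by (simp add: case_prod_beta')
  qed
  have m2: "(\<lambda>x. \<integral>\<^sup>+ \<sigma>. KM \<gamma> b (snd (g (fst x))) (snd x) \<sigma> * h (fst x) (fst (g (fst x)), post_vel (snd (g (fst x))) (snd x) \<sigma>) \<partial>sphere_measure)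
      \<in> borel_measurable (N \<Otimes>\<^sub>M lborel)"
    apply (rule S.borel_measurable_nn_integral)
    using m1 by (simp add: case_prod_beta')
  show ?thesis unfolding PsiF_def
    apply (rule lborel.borel_measurable_nn_integral)
    using m2 by (simp add: case_prod_beta')
qed

lemma inner_meas:
  fixes z :: "('d::finite) state"
  assumes [measurable]: "b \<in> borel_measurable borel" and hm[measurable]: "h \<in> borel_measurable borel"
  shows "(\<lambda>vs. \<integral>\<^sup>+ \<sigma>. KM \<gamma> b (snd z) vs \<sigma> * h (fst z, post_vel (snd z) vs \<sigma>) \<partial>sphere_measure) \<in> borel_measurable lborel"
proof -
  interpret S: sigma_finite_measure "sphere_measure :: (real^'d) measure" by (rule sf_sphere)
  have "(\<lambda>x. KM \<gamma> b (snd z) (fst x) (snd x) * h (fst z, post_vel (snd z) (fst x) (snd x))) \<in> borel_measurable (lborel \<Otimes>\<^sub>M sphere_measure)"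
  proof -
    have "(\<lambda>x. (fst z, post_vel (snd z) (fst x) (snd x))) \<in> borel_measurable (lborel \<Otimes>\<^sub>M (sphere_measure :: (real^'d) measure))"
      by measurable
    from measurable_comp[OF this hm] show ?thesis by (simp add: o_def) measurable
  qed
  then show ?thesis
    by (intro S.borel_measurable_nn_integral) (simp add: case_prod_beta')
qed

lemma PsiF_meas1[measurable]:
  assumes [measurable]: "b \<in> borel_measurable borel" and hm[measurable]: "h \<in> borel_measurable borel"
  shows "PsiF \<gamma> b h \<in> borel_measurable (borel :: ('d::finite) state measure)"
proof -
  have "case_prod (\<lambda>p::('d::finite) state. h) \<in> borel_measurable (borel \<Otimes>\<^sub>M borel)" by measurable
  from PsiF_meas[OF assms(1) this, of "\<lambda>x. x"] show ?thesis by simp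
qed

lemma PsiF_suminf:
  fixes h :: "nat \<Rightarrow> ('d::finite) state \<Rightarrow> ennreal"
  assumes [measurable]: "b \<in> borel_measurable borel" and hm[measurable]: "\<And>i. h i \<in> borel_measurable borel"
  shows "PsiF \<gamma> b (\<lambda>w. \<Sum>i. h i w) z = (\<Sum>i. PsiF \<gamma> b (h i) z)"
proof -
  have "PsiF \<gamma> b (\<lambda>w. \<Sum>i. h i w) z = (\<integral>\<^sup>+ vs. \<integral>\<^sup>+ \<sigma>. (\<Sum>i. KM \<gamma> b (snd z) vs \<sigma> * h i (fst z, post_vel (snd z) vs \<sigma>)) \<partial>sphere_measure \<partial>lborel)"
    unfolding PsiF_def by (simp add: ennreal_suminf_cmult)
  also have "\<dots> = (\<integral>\<^sup>+ vs. (\<Sum>i. \<integral>\<^sup>+ \<sigma>. KM \<gamma> b (snd z) vs \<sigma> * h i (fst z, post_vel (snd z) vs \<sigma>) \<partial>sphere_measure) \<partial>lborel)"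
    by (intro nn_integral_cong nn_integral_suminf) measurable
  also have "\<dots> = (\<Sum>i. \<integral>\<^sup>+ vs. \<integral>\<^sup>+ \<sigma>. KM \<gamma> b (snd z) vs \<sigma> * h i (fst z, post_vel (snd z) vs \<sigma>) \<partial>sphere_measure \<partial>lborel)"
    by (intro nn_integral_suminf inner_meas) auto
  finally show ?thesis unfolding PsiF_def .
qed

lemma gain_sets[simp, measurable_cong]: "sets (gain \<gamma> b \<mu>) = sets borel"
  unfolding gain_def using sets.sigma_sets_eq[of borel] by simp

lemma gain_emeasure:
  fixes \<nu> :: "('d::finite) state measure"
  assumes [measurable]: "b \<in> borel_measurable borel" and sn: "sets \<nu> = sets borel" and A: "A \<in> sets borel"
  shows "emeasure (gain \<gamma> b \<nu>) A = (\<integral>\<^sup>+ z. PsiF \<gamma> b (indicator A) z \<partial>\<nu>)"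
proof -
  have "emeasure (gain \<gamma> b \<nu>) A = (\<integral>\<^sup>+ z. \<integral>\<^sup>+ vs. \<integral>\<^sup>+ \<sigma>. ennreal (kernel \<gamma> b (snd z) vs \<sigma> * maxwellian vs) *
           indicator A (fst z, post_vel (snd z) vs \<sigma>) \<partial>sphere_measure \<partial>lborel \<partial>\<nu>)"
  unfolding gain_def
proof (rule emeasure_measure_of_sigma)
  show "sigma_algebra UNIV (sets (borel :: ('d::finite) state measure))"
    using sets.sigma_algebra_axioms[of "borel :: ('d::finite) state measure"] by simp
  show "positive (sets borel) (\<lambda>A. \<integral>\<^sup>+ z. \<integral>\<^sup>+ vs. \<integral>\<^sup>+ \<sigma>. ennreal (kernel \<gamma> b (snd z) vs \<sigma> * maxwellian vs) *
           indicator A (fst z, post_vel (snd z) vs \<sigma>) \<partial>sphere_measure \<partial>lborel \<partial>\<nu>)"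
    by (simp add: positive_def)
  show "countably_additive (sets borel) (\<lambda>A. \<integral>\<^sup>+ z. \<integral>\<^sup>+ vs. \<integral>\<^sup>+ \<sigma>. ennreal (kernel \<gamma> b (snd z) vs \<sigma> * maxwellian vs) *
           indicator A (fst z, post_vel (snd z) vs \<sigma>) \<partial>sphere_measure \<partial>lborel \<partial>\<nu>)"
  proof (rule countably_additiveI)
    fix F :: "nat \<Rightarrow> ('d::finite) state set"
    assume F: "range F \<subseteq> sets borel" "disjoint_family F" "\<Union> (range F) \<in> sets borel"
    have Fm[measurable]: "\<And>i. F i \<in> sets borel" using F by auto
    have "\<And>z. PsiF \<gamma> b (indicator (\<Union> (range F))) z = (\<Sum>i. PsiF \<gamma> b (indicator (F i)) z)"
    proof -
      fix z
      have "indicator (\<Union> (range F)) = (\<lambda>w. \<Sum>i. indicator (F i) w :: ennreal)"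
        using suminf_indicator[OF F(2)] by (auto simp: fun_eq_iff)
      then show "PsiF \<gamma> b (indicator (\<Union> (range F))) z = (\<Sum>i. PsiF \<gamma> b (indicator (F i)) z)"
        using PsiF_suminf[of b "\<lambda>i. indicator (F i)"] by simp
    qed
    then have "(\<integral>\<^sup>+ z. PsiF \<gamma> b (indicator (\<Union> (range F))) z \<partial>\<nu>) = (\<Sum>i. \<integral>\<^sup>+ z. PsiF \<gamma> b (indicator (F i)) z \<partial>\<nu>)"
      by (simp add: nn_integral_suminf measurable_cong_sets[OF sn refl])
    then show "(\<Sum>i. \<integral>\<^sup>+ z. \<integral>\<^sup>+ vs. \<integral>\<^sup>+ \<sigma>. ennreal (kernel \<gamma> b (snd z) vs \<sigma> * maxwellian vs) *
           indicator (F i) (fst z, post_vel (snd z) vs \<sigma>) \<partial>sphere_measure \<partial>lborel \<partial>\<nu>) =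
         (\<integral>\<^sup>+ z. \<integral>\<^sup>+ vs. \<integral>\<^sup>+ \<sigma>. ennreal (kernel \<gamma> b (snd z) vs \<sigma> * maxwellian vs) *
           indicator (\<Union> (range F)) (fst z, post_vel (snd z) vs \<sigma>) \<partial>sphere_measure \<partial>lborel \<partial>\<nu>)"
      by (simp add: PsiF_def KM_def)
  qed
  show "A \<in> sets borel" by fact
qed
  then show ?thesis by (simp add: PsiF_def KM_def)
qed

lemma nn_integral_cmult_lower: "c * integral\<^sup>N M f \<le> (\<integral>\<^sup>+ x. c * f x \<partial>M)"
proof -
  have "c * integral\<^sup>N M f = (SUP g \<in> {g. simple_function M g \<and> g \<le> f}. c * integral\<^sup>S M g)"
    unfolding nn_integral_def by (simp add: SUP_mult_left_ennreal)
  also have "\<dots> \<le> (\<integral>\<^sup>+ x. c * f x \<partial>M)"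
  proof (rule SUP_least)
    fix g assume g: "g \<in> {g. simple_function M g \<and> g \<le> f}"
    then have "c * integral\<^sup>S M g = integral\<^sup>S M (\<lambda>x. c * g x)" by simp
    also have "\<dots> = integral\<^sup>N M (\<lambda>x. c * g x)"
      using g by (intro nn_integral_eq_simple_integral[symmetric]) (auto intro: simple_function_mult)
    also have "\<dots> \<le> (\<integral>\<^sup>+ x. c * f x \<partial>M)"
      using g by (intro nn_integral_mono mult_left_mono) (auto simp: le_fun_def)
    finally show "c * integral\<^sup>S M g \<le> (\<integral>\<^sup>+ x. c * f x \<partial>M)" .
  qed
  finally show ?thesis .
qed

lemma le_measureI': "sets M = sets N \<Longrightarrow> (\<And>A. A \<in> sets M \<Longrightarrow> emeasure M A \<le> emeasure N A) \<Longrightarrow> M \<le> N"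
proof -
  assume s: "sets M = sets N" and e: "\<And>A. A \<in> sets M \<Longrightarrow> emeasure M A \<le> emeasure N A"
  have sp: "space M = space N" using s by (rule sets_eq_imp_space_eq)
  have "emeasure M \<le> emeasure N"
  proof (rule le_funI)
    fix A show "emeasure M A \<le> emeasure N A"
      using e[of A] s by (cases "A \<in> sets M") (auto simp: emeasure_notin_sets)
  qed
  then show "M \<le> N" unfolding le_measure_iff using s sp by simp
qed

lemma ind_ineq:
  fixes \<nu> :: "'a::topological_space measure" and X :: "real \<Rightarrow> 'a measure"
  assumes sn: "sets \<nu> = sets borel" and sX: "\<And>r. sets (X r) = sets borel"
    and mX: "\<And>B. B \<in> sets borel \<Longrightarrow> (\<lambda>r. emeasure (X r) B) \<in> borel_measurable borel"
    and ineq: "\<And>B. B \<in> sets borel \<Longrightarrow> c * (\<integral>\<^sup>+ r. emeasure (X r) B * indicator I r \<partial>lborel) \<le> emeasure \<nu> B"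
    and I[measurable]: "I \<in> sets borel"
    and u: "u \<in> borel_measurable borel"
  shows "(\<lambda>r. \<integral>\<^sup>+ x. u x \<partial>X r) \<in> borel_measurable borel \<and>
         c * (\<integral>\<^sup>+ r. (\<integral>\<^sup>+ x. u x \<partial>X r) * indicator I r \<partial>lborel) \<le> (\<integral>\<^sup>+ x. u x \<partial>\<nu>)"
  using u
proof (induct rule: borel_measurable_induct)
  case (cong f g)
  have sp: "\<And>r. space (X r) = UNIV" using sets_eq_imp_space_eq[OF sX] by simp
  have spn: "space \<nu> = UNIV" using sets_eq_imp_space_eq[OF sn] by simp
  have "\<And>r. (\<integral>\<^sup>+ x. f x \<partial>X r) = (\<integral>\<^sup>+ x. g x \<partial>X r)" using cong(3) by (intro nn_integral_cong) (auto simp: sp)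
  moreover have "(\<integral>\<^sup>+ x. f x \<partial>\<nu>) = (\<integral>\<^sup>+ x. g x \<partial>\<nu>)" using cong(3) by (intro nn_integral_cong) (auto simp: spn)
  ultimately show ?case using cong(4) by simp
next
  case (set A)
  have "\<And>r. (\<integral>\<^sup>+ x. indicator A x \<partial>X r) = emeasure (X r) A"
    using set sX by (intro nn_integral_indicator) auto
  moreover have "(\<integral>\<^sup>+ x. indicator A x \<partial>\<nu>) = emeasure \<nu> A"
    using set sn by (intro nn_integral_indicator) auto
  ultimately show ?case using mX[OF set] ineq[OF set] by simp
next
  case (mult u c')
  have um: "\<And>r. u \<in> borel_measurable (X r)" by (subst measurable_cong_sets[OF sX refl]) (rule mult(2))
  have umn: "u \<in> borel_measurable \<nu>" by (subst measurable_cong_sets[OF sn refl]) (rule mult(2))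
  have e1: "\<And>r. (\<integral>\<^sup>+ x. c' * u x \<partial>X r) = c' * (\<integral>\<^sup>+ x. u x \<partial>X r)"
    using um by (intro nn_integral_cmult) auto
  have m: "(\<lambda>r. \<integral>\<^sup>+ x. u x \<partial>X r) \<in> borel_measurable borel" using mult(4) by simp
  then have m': "(\<lambda>r. (\<integral>\<^sup>+ x. u x \<partial>X r) * indicator I r) \<in> borel_measurable lborel" by measurable
  have "c * (\<integral>\<^sup>+ r. (\<integral>\<^sup>+ x. c' * u x \<partial>X r) * indicator I r \<partial>lborel)
      = c' * (c * (\<integral>\<^sup>+ r. (\<integral>\<^sup>+ x. u x \<partial>X r) * indicator I r \<partial>lborel))"
    using nn_integral_cmult[OF m', of c'] by (simp add: e1 mult.assoc mult.left_commute)
  also have "\<dots> \<le> c' * (\<integral>\<^sup>+ x. u x \<partial>\<nu>)" using mult(4) by (intro mult_left_mono) auto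
  also have "\<dots> = (\<integral>\<^sup>+ x. c' * u x \<partial>\<nu>)" using umn by (intro nn_integral_cmult[symmetric]) auto
  finally show ?case using m by (simp add: e1)
next
  case (add u v)
  have um: "\<And>r. u \<in> borel_measurable (X r)" "\<And>r. v \<in> borel_measurable (X r)"
    by (subst measurable_cong_sets[OF sX refl], rule add)+
  have umn: "u \<in> borel_measurable \<nu>" "v \<in> borel_measurable \<nu>"
    by (subst measurable_cong_sets[OF sn refl], rule add)+
  have e1: "\<And>r. (\<integral>\<^sup>+ x. v x + u x \<partial>X r) = (\<integral>\<^sup>+ x. v x \<partial>X r) + (\<integral>\<^sup>+ x. u x \<partial>X r)"
    using um by (intro nn_integral_add) auto
  have mu: "(\<lambda>r. \<integral>\<^sup>+ x. u x \<partial>X r) \<in> borel_measurable borel" using add(3) by simp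
  have mv: "(\<lambda>r. \<integral>\<^sup>+ x. v x \<partial>X r) \<in> borel_measurable borel" using add(7) by simp
  have "c * (\<integral>\<^sup>+ r. (\<integral>\<^sup>+ x. v x + u x \<partial>X r) * indicator I r \<partial>lborel)
     = c * (\<integral>\<^sup>+ r. (\<integral>\<^sup>+ x. v x \<partial>X r) * indicator I r \<partial>lborel) + c * (\<integral>\<^sup>+ r. (\<integral>\<^sup>+ x. u x \<partial>X r) * indicator I r \<partial>lborel)"
    unfolding e1 distrib_right
    by (subst nn_integral_add) (use mu mv in \<open>auto simp: distrib_left\<close>)
  also have "\<dots> \<le> (\<integral>\<^sup>+ x. v x \<partial>\<nu>) + (\<integral>\<^sup>+ x. u x \<partial>\<nu>)"
    using add(3) add(7) by (intro add_mono) auto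
  also have "\<dots> = (\<integral>\<^sup>+ x. v x + u x \<partial>\<nu>)" using umn by (intro nn_integral_add[symmetric]) auto
  finally show ?case using mu mv e1 by simp
next
  case (seq U)
  have um: "\<And>i r. U i \<in> borel_measurable (X r)" by (subst measurable_cong_sets[OF sX refl]) (rule seq)
  have umn: "\<And>i. U i \<in> borel_measurable \<nu>" by (subst measurable_cong_sets[OF sn refl]) (rule seq)
  have e1: "\<And>r. (\<integral>\<^sup>+ x. (SUP i. U i) x \<partial>X r) = (SUP i. \<integral>\<^sup>+ x. U i x \<partial>X r)"
    unfolding SUP_apply by (rule nn_integral_monotone_convergence_SUP[OF seq(4) um])
  have mi: "\<And>i. (\<lambda>r. \<integral>\<^sup>+ x. U i x \<partial>X r) \<in> borel_measurable borel" using seq(3) by simp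
  have inc: "incseq (\<lambda>i r. (\<integral>\<^sup>+ x. U i x \<partial>X r) * indicator I r)"
    using seq(4) by (auto simp: incseq_def le_fun_def intro!: mult_right_mono nn_integral_mono)
  have "c * (\<integral>\<^sup>+ r. (\<integral>\<^sup>+ x. (SUP i. U i) x \<partial>X r) * indicator I r \<partial>lborel)
     = c * (\<integral>\<^sup>+ r. (SUP i. (\<integral>\<^sup>+ x. U i x \<partial>X r) * indicator I r) \<partial>lborel)"
    unfolding e1 by (simp only: SUP_mult_right_ennreal)
  also have "\<dots> = c * (SUP i. \<integral>\<^sup>+ r. (\<integral>\<^sup>+ x. U i x \<partial>X r) * indicator I r \<partial>lborel)"
    using mi inc by (subst nn_integral_monotone_convergence_SUP) auto
  also have "\<dots> = (SUP i. c * \<integral>\<^sup>+ r. (\<integral>\<^sup>+ x. U i x \<partial>X r) * indicator I r \<partial>lborel)"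
    by (simp add: SUP_mult_left_ennreal)
  also have "\<dots> \<le> (SUP i. \<integral>\<^sup>+ x. U i x \<partial>\<nu>)"
    using seq(3) by (intro SUP_mono) auto
  also have "\<dots> = (\<integral>\<^sup>+ x. (SUP i. U i) x \<partial>\<nu>)"
    unfolding SUP_apply by (rule nn_integral_monotone_convergence_SUP[OF seq(4) umn, symmetric])
  finally show ?case using mi e1 by simp
qed

lemma sets_transport[simp, measurable_cong]: "sets (transport Fl t \<mu>) = sets borel"
  by (simp add: transport_def)
lemma sets_damped[simp, measurable_cong]: "sets (damped Fl k t \<mu>) = sets borel"
  by (simp add: damped_def)
lemma sets_restr[simp, measurable_cong]: "sets (restr E \<mu>) = sets \<mu>"
  by (simp add: restr_def)

locale gen =
  fixes \<gamma> :: real and b :: "real \<Rightarrow> real" and Fl :: "real \<Rightarrow> ('d::finite) state \<Rightarrow> 'd state"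
    and E :: "'d state set" and C :: real
  assumes bm[measurable]: "b \<in> borel_measurable borel"
    and Flm: "(\<lambda>p. Fl (fst p) (snd p)) \<in> borel_measurable (borel \<Otimes>\<^sub>M borel)"
    and Em[measurable]: "E \<in> sets borel"
    and Einv: "\<And>z \<tau>. z \<in> E \<Longrightarrow> Fl \<tau> z \<in> E"
    and km[measurable]: "(coll_freq \<gamma> b :: real^'d \<Rightarrow> real) \<in> borel_measurable borel"
    and kb: "\<And>z. z \<in> E \<Longrightarrow> coll_freq \<gamma> b (snd z) \<le> C"
    and Cpos: "C > 0"
begin

lemma Flm'[measurable (raw)]:
  assumes "f \<in> borel_measurable M" "g \<in> borel_measurable M"
  shows "(\<lambda>x. Fl (f x) (g x)) \<in> borel_measurable M"
proof -
  have "(\<lambda>x. (f x, g x)) \<in> measurable M (borel \<Otimes>\<^sub>M borel)" using assms by measurable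
  from measurable_comp[OF this Flm] show ?thesis by (simp add: o_def)
qed

abbreviation "\<kappa> \<equiv> coll_freq \<gamma> b"

lemma Fl_meas[measurable]: "Fl \<tau> \<in> borel_measurable borel"
  using Flm'[of "\<lambda>_. \<tau>" borel "\<lambda>x. x"] by simp

lemma Fl_vimage[measurable]: "A \<in> sets borel \<Longrightarrow> Fl \<tau> -` A \<in> sets borel"
  using measurable_sets[OF Fl_meas, of A] by simp

lemma sets_bl: "sets (borel \<Otimes>\<^sub>M lborel) = sets ((borel::'x::topological_space measure) \<Otimes>\<^sub>M (borel :: real measure))"
  by (intro sets_pair_measure_cong) auto

definition w :: "real \<Rightarrow> 'd state \<Rightarrow> ennreal" where
  "w \<tau> z = ennreal (exp (- enn2real (\<integral>\<^sup>+ \<sigma>. ennreal (\<kappa> (snd (Fl \<sigma> z))) * indicator {0..\<tau>} \<sigma> \<partial>lborel)))"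

lemma w_meas[measurable]: "w \<tau> \<in> borel_measurable borel"
proof -
  have m1: "(\<lambda>x. Fl (snd x) (fst x)) \<in> borel_measurable (borel \<Otimes>\<^sub>M borel)"
    by (rule Flm') measurable
  have m2: "(\<lambda>x. \<kappa> (snd x)) \<in> borel_measurable (borel :: 'd state measure)"
    using measurable_comp[OF snd_borel_meas km] by (simp add: o_def)
  have m3: "(\<lambda>x. \<kappa> (snd (Fl (snd x) (fst x)))) \<in> borel_measurable (borel \<Otimes>\<^sub>M borel)"
    using measurable_comp[OF m1 m2] by (simp add: o_def)
  have m4: "(\<lambda>x::'d state \<times> real. indicator {0..\<tau>} (snd x) :: ennreal) \<in> borel_measurable (borel \<Otimes>\<^sub>M borel)"
    using measurable_comp[OF measurable_snd borel_measurable_indicator[of "{0..\<tau>}"]] by (simp add: o_def)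
  have "(\<lambda>x. ennreal (\<kappa> (snd (Fl (snd x) (fst x)))) * indicator {0..\<tau>} (snd x)) \<in> borel_measurable (borel \<Otimes>\<^sub>M borel)"
    using m3 m4 by measurable
  then have "(\<lambda>x. ennreal (\<kappa> (snd (Fl (snd x) (fst x)))) * indicator {0..\<tau>} (snd x)) \<in> borel_measurable (borel \<Otimes>\<^sub>M lborel)"
    by (subst measurable_cong_sets[OF sets_bl refl])
  then have "(\<lambda>z. \<integral>\<^sup>+ \<sigma>. ennreal (\<kappa> (snd (Fl \<sigma> z))) * indicator {0..\<tau>} \<sigma> \<partial>lborel) \<in> borel_measurable borel"
    by (intro lborel.borel_measurable_nn_integral) (simp add: case_prod_beta')
  then show ?thesis unfolding w_def by measurable
qed

lemma w_lower: assumes "z \<in> E" "\<tau> \<ge> 0" shows "ennreal (exp (- \<tau> * C)) \<le> w \<tau> z"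
proof -
  have "(\<integral>\<^sup>+ \<sigma>. ennreal (\<kappa> (snd (Fl \<sigma> z))) * indicator {0..\<tau>} \<sigma> \<partial>lborel) \<le> (\<integral>\<^sup>+ \<sigma>. ennreal C * indicator {0..\<tau>} \<sigma> \<partial>lborel)"
  proof (intro nn_integral_mono)
    fix x
    have "ennreal (\<kappa> (snd (Fl x z))) \<le> ennreal C" using kb[OF Einv[OF assms(1)]] by (rule ennreal_leI)
    then show "ennreal (\<kappa> (snd (Fl x z))) * indicator {0..\<tau>} x \<le> ennreal C * indicator {0..\<tau>} x"
      by (rule mult_right_mono) simp
  qed
  also have "\<dots> = ennreal (C * \<tau>)"
    using assms Cpos by (simp add: nn_integral_cmult_indicator ennreal_mult)
  finally have "enn2real (\<integral>\<^sup>+ \<sigma>. ennreal (\<kappa> (snd (Fl \<sigma> z))) * indicator {0..\<tau>} \<sigma> \<partial>lborel) \<le> C * \<tau>"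
    using assms Cpos by (intro enn2real_leI) auto
  then show ?thesis unfolding w_def by (intro ennreal_leI) (simp add: mult.commute)
qed

lemma damped_eq: "damped Fl \<kappa> \<tau> \<nu> = distr (density \<nu> (w \<tau>)) borel (Fl \<tau>)"
  unfolding damped_def w_def ..

lemma damped_lower:
  assumes sn: "sets \<nu> = sets borel" and t: "\<tau> \<ge> 0" and A[measurable]: "A \<in> sets borel"
  shows "ennreal (exp (- \<tau> * C)) * emeasure \<nu> (Fl \<tau> -` A \<inter> E) \<le> emeasure (damped Fl \<kappa> \<tau> \<nu>) A"
proof -
  have Flt: "Fl \<tau> \<in> measurable (density \<nu> (w \<tau>)) borel"
    by (subst measurable_cong_sets[of _ borel]) (auto simp: sn)
  have wm: "w \<tau> \<in> borel_measurable \<nu>" by (subst measurable_cong_sets[OF sn refl]) simp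
  have sp: "space \<nu> = UNIV" using sets_eq_imp_space_eq[OF sn] by simp
  have pre[measurable]: "Fl \<tau> -` A \<inter> E \<in> sets \<nu>" unfolding sn by measurable
  have pre2: "Fl \<tau> -` A \<in> sets \<nu>" unfolding sn by measurable
  have "emeasure (damped Fl \<kappa> \<tau> \<nu>) A = emeasure (density \<nu> (w \<tau>)) (Fl \<tau> -` A \<inter> space \<nu>)"
    unfolding damped_eq by (subst emeasure_distr[OF Flt]) auto
  also have "\<dots> = (\<integral>\<^sup>+ z. w \<tau> z * indicator (Fl \<tau> -` A) z \<partial>\<nu>)"
    using pre2 by (subst emeasure_density[OF wm]) (auto simp: sp)
  also have "\<dots> \<ge> (\<integral>\<^sup>+ z. ennreal (exp (- \<tau> * C)) * indicator (Fl \<tau> -` A \<inter> E) z \<partial>\<nu>)"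
    using w_lower t by (intro nn_integral_mono) (auto simp: indicator_def)
  moreover have "(\<integral>\<^sup>+ z. ennreal (exp (- \<tau> * C)) * indicator (Fl \<tau> -` A \<inter> E) z \<partial>\<nu>) = ennreal (exp (- \<tau> * C)) * emeasure \<nu> (Fl \<tau> -` A \<inter> E)"
    by (rule nn_integral_cmult_indicator[OF pre])
  ultimately show ?thesis by simp
qed

lemma damped_int_lower:
  assumes z0: "z0 \<in> E" and t: "\<tau> \<ge> 0" and P[measurable]: "P \<in> borel_measurable borel"
  shows "ennreal (exp (- \<tau> * C)) * P (Fl \<tau> z0) \<le> (\<integral>\<^sup>+ x. P x \<partial>damped Fl \<kappa> \<tau> (return borel z0))"
proof -
  have Flt: "Fl \<tau> \<in> measurable (density (return borel z0) (w \<tau>)) borel"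
    by (subst measurable_cong_sets[of _ borel]) auto
  have "(\<integral>\<^sup>+ x. P x \<partial>damped Fl \<kappa> \<tau> (return borel z0)) = (\<integral>\<^sup>+ x. P (Fl \<tau> x) \<partial>density (return borel z0) (w \<tau>))"
    unfolding damped_eq by (rule nn_integral_distr[OF Flt]) simp
  also have "\<dots> = (\<integral>\<^sup>+ x. w \<tau> x * P (Fl \<tau> x) \<partial>return borel z0)"
    by (rule nn_integral_density) auto
  also have "\<dots> = w \<tau> z0 * P (Fl \<tau> z0)"
    by (rule nn_integral_return) auto
  finally show ?thesis using w_lower[OF z0 t] by (simp add: mult_right_mono)
qed

lemma transport_restr_emeasure:
  assumes sn: "sets \<mu> = sets borel" and A[measurable]: "A \<in> sets borel"
  shows "emeasure (transport Fl \<tau> (restr E \<mu>)) A = emeasure \<mu> (Fl \<tau> -` A \<inter> E)"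
proof -
  have Flt: "Fl \<tau> \<in> measurable (restr E \<mu>) borel"
    by (subst measurable_cong_sets[of _ borel]) (auto simp: sn)
  have sp: "space \<mu> = UNIV" using sets_eq_imp_space_eq[OF sn] by simp
  have im: "indicator E \<in> borel_measurable \<mu>" by (subst measurable_cong_sets[OF sn refl]) simp
  have pre[measurable]: "Fl \<tau> -` A \<inter> E \<in> sets \<mu>" unfolding sn by measurable
  have pre2: "Fl \<tau> -` A \<in> sets \<mu>" unfolding sn by measurable
  have "emeasure (transport Fl \<tau> (restr E \<mu>)) A = emeasure (restr E \<mu>) (Fl \<tau> -` A \<inter> space \<mu>)"
    unfolding transport_def by (subst emeasure_distr[OF Flt]) (auto simp: restr_def)
  also have "\<dots> = (\<integral>\<^sup>+ z. indicator E z * indicator (Fl \<tau> -` A) z \<partial>\<mu>)"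
    unfolding restr_def using pre2 by (subst emeasure_density[OF im]) (auto simp: sp)
  also have "\<dots> = (\<integral>\<^sup>+ z. indicator (Fl \<tau> -` A \<inter> E) z \<partial>\<mu>)"
    by (intro nn_integral_cong) (auto simp: indicator_def)
  also have "\<dots> = emeasure \<mu> (Fl \<tau> -` A \<inter> E)" by (rule nn_integral_indicator[OF pre])
  finally show ?thesis .
qed

lemma transport_restr_int:
  assumes z0: "z0 \<in> E" and P[measurable]: "P \<in> borel_measurable borel"
  shows "(\<integral>\<^sup>+ x. P x \<partial>transport Fl \<tau> (restr E (return borel z0))) = P (Fl \<tau> z0)"
proof -
  have Flt: "Fl \<tau> \<in> measurable (restr E (return borel z0)) borel"
    by (subst measurable_cong_sets[of _ borel]) auto
  have "(\<integral>\<^sup>+ x. P x \<partial>transport Fl \<tau> (restr E (return borel z0))) = (\<integral>\<^sup>+ x. P (Fl \<tau> x) \<partial>density (return borel z0) (indicator E))"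
    unfolding transport_def restr_def by (rule nn_integral_distr[OF Flt[unfolded restr_def]]) simp
  also have "\<dots> = (\<integral>\<^sup>+ x. indicator E x * P (Fl \<tau> x) \<partial>return borel z0)"
    by (rule nn_integral_density) auto
  also have "\<dots> = indicator E z0 * P (Fl \<tau> z0)"
    by (rule nn_integral_return) auto
  finally show ?thesis using z0 by simp
qed

end

context gen begin

abbreviation "Psi B \<equiv> PsiF \<gamma> b (indicator B)"

lemma Psi_meas[measurable]: "B \<in> sets borel \<Longrightarrow> Psi B \<in> borel_measurable borel"
  by (intro PsiF_meas1 bm) simp

definition XX :: "'d state \<Rightarrow> real \<Rightarrow> real \<Rightarrow> 'd state measure" where
  "XX z0 s r = transport Fl (s - r) (restr E (gain \<gamma> b (transport Fl r (restr E (return borel z0)))))"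

lemma sets_XX[simp]: "sets (XX z0 s r) = sets borel" by (simp add: XX_def)

lemma XX_emeasure:
  assumes z0: "z0 \<in> E" and B[measurable]: "B \<in> sets borel"
  shows "emeasure (XX z0 s r) B = Psi (Fl (s - r) -` B \<inter> E) (Fl r z0)"
proof -
  have "emeasure (XX z0 s r) B = emeasure (gain \<gamma> b (transport Fl r (restr E (return borel z0)))) (Fl (s - r) -` B \<inter> E)"
    unfolding XX_def by (rule transport_restr_emeasure) auto
  also have "\<dots> = (\<integral>\<^sup>+ z. Psi (Fl (s - r) -` B \<inter> E) z \<partial>transport Fl r (restr E (return borel z0)))"
    by (rule gain_emeasure) auto
  also have "\<dots> = Psi (Fl (s - r) -` B \<inter> E) (Fl r z0)"
    by (rule transport_restr_int[OF z0]) auto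
  finally show ?thesis .
qed

lemma XX_meas:
  assumes z0: "z0 \<in> E" and B[measurable]: "B \<in> sets borel"
  shows "(\<lambda>r. emeasure (XX z0 s r) B) \<in> borel_measurable borel"
proof -
  have ind: "\<And>r. indicator (Fl (s - r) -` B \<inter> E) = (\<lambda>w. indicator B (Fl (s - r) w) * indicator E w :: ennreal)"
    by (auto simp: indicator_def fun_eq_iff)
  have h: "case_prod (\<lambda>r w. indicator B (Fl (s - r) w) * indicator E w :: ennreal) \<in> borel_measurable (borel \<Otimes>\<^sub>M borel)"
  proof -
    have "(\<lambda>x::real \<times> 'd state. Fl (s - fst x) (snd x)) \<in> borel_measurable (borel \<Otimes>\<^sub>M borel)"
      by (rule Flm') measurable
    then have "(\<lambda>x::real \<times> 'd state. indicator B (Fl (s - fst x) (snd x)) * indicator E (snd x) :: ennreal) \<in> borel_measurable (borel \<Otimes>\<^sub>M borel)"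
      by measurable
    then show ?thesis by (simp add: case_prod_beta')
  qed
  have "(\<lambda>r. PsiF \<gamma> b (\<lambda>w. indicator B (Fl (s - r) w) * indicator E w) (Fl r z0)) \<in> borel_measurable borel"
    by (rule PsiF_meas[OF bm h]) (rule Flm'; measurable)
  then show ?thesis by (simp add: XX_emeasure[OF z0 B] ind)
qed

context
  fixes z0 f
  assumes z0: "z0 \<in> E" and mild: "mild_solution Fl \<gamma> b (return borel z0) f"
begin

lemma f_sets: "s \<ge> 0 \<Longrightarrow> sets (f s) = sets borel"
  using mild unfolding mild_solution_def by auto

lemma f_eq: "s \<ge> 0 \<Longrightarrow> A \<in> sets borel \<Longrightarrow> emeasure (f s) A =
        emeasure (damped Fl \<kappa> s (return borel z0)) A
        + (\<integral>\<^sup>+ r. emeasure (damped Fl \<kappa> (s - r) (gain \<gamma> b (f r))) A * indicator {0..s} r \<partial>lborel)"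
  using mild unfolding mild_solution_def by auto

lemma F2: "r \<ge> 0 \<Longrightarrow> damped Fl \<kappa> r (return borel z0) \<le> f r"
  by (rule le_measureI') (auto simp: f_sets f_eq)

lemma F3:
  assumes r: "r \<ge> 0" and B[measurable]: "B \<in> sets borel"
  shows "ennreal (exp (- r * C)) * Psi B (Fl r z0) \<le> emeasure (gain \<gamma> b (f r)) B"
proof -
  have "ennreal (exp (- r * C)) * Psi B (Fl r z0) \<le> (\<integral>\<^sup>+ x. Psi B x \<partial>damped Fl \<kappa> r (return borel z0))"
    by (rule damped_int_lower[OF z0 r]) simp
  also have "\<dots> \<le> (\<integral>\<^sup>+ x. Psi B x \<partial>f r)"
    by (rule nn_integral_mono_measure) (auto simp: f_sets r F2)
  also have "\<dots> = emeasure (gain \<gamma> b (f r)) B"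
    by (rule gain_emeasure[symmetric]) (auto simp: f_sets r)
  finally show ?thesis .
qed

lemma F4:
  assumes s: "s \<ge> 0" and B[measurable]: "B \<in> sets borel"
  shows "ennreal (exp (- s * C)) * (\<integral>\<^sup>+ r. emeasure (XX z0 s r) B * indicator {0..s} r \<partial>lborel) \<le> emeasure (f s) B"
proof -
  have m: "(\<lambda>r. emeasure (XX z0 s r) B * indicator {0..s} r) \<in> borel_measurable lborel"
    using XX_meas[OF z0 B, of s] by measurable
  have "ennreal (exp (- s * C)) * (\<integral>\<^sup>+ r. emeasure (XX z0 s r) B * indicator {0..s} r \<partial>lborel)
     = (\<integral>\<^sup>+ r. ennreal (exp (- s * C)) * (emeasure (XX z0 s r) B * indicator {0..s} r) \<partial>lborel)"
    by (rule nn_integral_cmult[OF m, symmetric])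
  also have "\<dots> \<le> (\<integral>\<^sup>+ r. emeasure (damped Fl \<kappa> (s - r) (gain \<gamma> b (f r))) B * indicator {0..s} r \<partial>lborel)"
  proof (intro nn_integral_mono)
    fix r
    show "ennreal (exp (- s * C)) * (emeasure (XX z0 s r) B * indicator {0..s} r)
       \<le> emeasure (damped Fl \<kappa> (s - r) (gain \<gamma> b (f r))) B * indicator {0..s} r"
    proof (cases "r \<in> {0..s}")
      case True
      then have r0: "r \<ge> 0" and rs: "s - r \<ge> 0" by auto
      have pre[measurable]: "Fl (s - r) -` B \<inter> E \<in> sets borel" by measurable
      have ee: "ennreal (exp (- s * C)) = ennreal (exp (- (s - r) * C)) * ennreal (exp (- r * C))"
        by (simp add: ennreal_mult[symmetric] exp_add[symmetric] algebra_simps)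
      have "ennreal (exp (- s * C)) * emeasure (XX z0 s r) B
          = ennreal (exp (- (s - r) * C)) * (ennreal (exp (- r * C)) * Psi (Fl (s - r) -` B \<inter> E) (Fl r z0))"
        by (simp only: XX_emeasure[OF z0 B] ee mult.assoc)
      also have "\<dots> \<le> ennreal (exp (- (s - r) * C)) * emeasure (gain \<gamma> b (f r)) (Fl (s - r) -` B \<inter> E)"
        by (intro mult_left_mono F3[OF r0 pre]) auto
      also have "\<dots> \<le> emeasure (damped Fl \<kappa> (s - r) (gain \<gamma> b (f r))) B"
        by (rule damped_lower) (use True in \<open>auto simp: f_sets\<close>)
      finally show ?thesis using True by (simp add: mult.assoc[symmetric])
    qed simp
  qed
  also have "\<dots> \<le> emeasure (f s) B" using f_eq[OF s B] by simp
  finally show ?thesis .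
qed

lemma F5:
  assumes s: "s \<ge> 0" and B[measurable]: "B \<in> sets borel"
  shows "ennreal (exp (- s * C)) * (\<integral>\<^sup>+ r. emeasure (gain \<gamma> b (XX z0 s r)) B * indicator {0..s} r \<partial>lborel)
     \<le> emeasure (gain \<gamma> b (f s)) B"
proof -
  have "(\<lambda>r. \<integral>\<^sup>+ x. Psi B x \<partial>XX z0 s r) \<in> borel_measurable borel \<and>
         ennreal (exp (- s * C)) * (\<integral>\<^sup>+ r. (\<integral>\<^sup>+ x. Psi B x \<partial>XX z0 s r) * indicator {0..s} r \<partial>lborel) \<le> (\<integral>\<^sup>+ x. Psi B x \<partial>f s)"
    by (rule ind_ineq[where X="XX z0 s", OF f_sets[OF s] sets_XX XX_meas[OF z0] F4[OF s]]) auto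
  moreover have "\<And>r. (\<integral>\<^sup>+ x. Psi B x \<partial>XX z0 s r) = emeasure (gain \<gamma> b (XX z0 s r)) B"
    by (rule gain_emeasure[symmetric]) auto
  moreover have "(\<integral>\<^sup>+ x. Psi B x \<partial>f s) = emeasure (gain \<gamma> b (f s)) B"
    by (rule gain_emeasure[symmetric]) (auto simp: f_sets s)
  ultimately show ?thesis by simp
qed

lemma F6:
  assumes s: "s \<ge> 0" "s \<le> t" and A[measurable]: "A \<in> sets borel"
  shows "ennreal (exp (- t * C)) * (\<integral>\<^sup>+ r. emeasure (transport Fl (t - s) (restr E (gain \<gamma> b (XX z0 s r)))) A * indicator {0..s} r \<partial>lborel)
     \<le> emeasure (damped Fl \<kappa> (t - s) (gain \<gamma> b (f s))) A"
proof -
  have pre[measurable]: "Fl (t - s) -` A \<inter> E \<in> sets borel" by measurable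
  have ee: "ennreal (exp (- t * C)) = ennreal (exp (- (t - s) * C)) * ennreal (exp (- s * C))"
    by (simp add: ennreal_mult[symmetric] exp_add[symmetric] algebra_simps)
  have "ennreal (exp (- t * C)) * (\<integral>\<^sup>+ r. emeasure (transport Fl (t - s) (restr E (gain \<gamma> b (XX z0 s r)))) A * indicator {0..s} r \<partial>lborel)
     = ennreal (exp (- (t - s) * C)) * (ennreal (exp (- s * C)) * (\<integral>\<^sup>+ r. emeasure (gain \<gamma> b (XX z0 s r)) (Fl (t - s) -` A \<inter> E) * indicator {0..s} r \<partial>lborel))"
  proof -
    have eqr: "\<And>r. emeasure (transport Fl (t - s) (restr E (gain \<gamma> b (XX z0 s r)))) A = emeasure (gain \<gamma> b (XX z0 s r)) (Fl (t - s) -` A \<inter> E)"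
      by (rule transport_restr_emeasure) auto
    show ?thesis by (simp only: eqr ee mult.assoc)
  qed
  also have "\<dots> \<le> ennreal (exp (- (t - s) * C)) * emeasure (gain \<gamma> b (f s)) (Fl (t - s) -` A \<inter> E)"
    by (intro mult_left_mono F5[OF s(1) pre]) auto
  also have "\<dots> \<le> emeasure (damped Fl \<kappa> (t - s) (gain \<gamma> b (f s))) A"
    by (rule damped_lower) (use s in \<open>auto simp: f_sets\<close>)
  finally show ?thesis .
qed

theorem gen_main:
  assumes t: "t \<ge> 0" and A[measurable]: "A \<in> sets borel"
  shows "ennreal (exp (- t * C)) *
           (\<integral>\<^sup>+ s. (\<integral>\<^sup>+ r. emeasure (transport Fl (t - s) (restr E (gain \<gamma> b (XX z0 s r)))) A
                   * indicator {0..s} r \<partial>lborel) * indicator {0..t} s \<partial>lborel)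
         \<le> emeasure (f t) A"
proof -
  have "ennreal (exp (- t * C)) *
           (\<integral>\<^sup>+ s. (\<integral>\<^sup>+ r. emeasure (transport Fl (t - s) (restr E (gain \<gamma> b (XX z0 s r)))) A
                   * indicator {0..s} r \<partial>lborel) * indicator {0..t} s \<partial>lborel)
      \<le> (\<integral>\<^sup>+ s. ennreal (exp (- t * C)) * ((\<integral>\<^sup>+ r. emeasure (transport Fl (t - s) (restr E (gain \<gamma> b (XX z0 s r)))) A
                   * indicator {0..s} r \<partial>lborel) * indicator {0..t} s) \<partial>lborel)"
    by (rule nn_integral_cmult_lower)
  also have "\<dots> \<le> (\<integral>\<^sup>+ s. emeasure (damped Fl \<kappa> (t - s) (gain \<gamma> b (f s))) A * indicator {0..t} s \<partial>lborel)"
  proof (intro nn_integral_mono)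
    fix s
    show "ennreal (exp (- t * C)) * ((\<integral>\<^sup>+ r. emeasure (transport Fl (t - s) (restr E (gain \<gamma> b (XX z0 s r)))) A
                   * indicator {0..s} r \<partial>lborel) * indicator {0..t} s)
        \<le> emeasure (damped Fl \<kappa> (t - s) (gain \<gamma> b (f s))) A * indicator {0..t} s"
      using F6[of s t A] A by (cases "s \<in> {0..t}") (auto simp: mult.assoc[symmetric])
  qed
  also have "\<dots> \<le> emeasure (f t) A" using f_eq[OF t A] by simp
  finally show ?thesis .
qed

end

end

proposition
 fixes f :: "real^'n::finite \<Rightarrow> real^'n::_"
  assumes "linear f" "S \<in> lmeasurable"
  shows measurable_linear_image': "(f ` S) \<in> lmeasurable"
    and measure_linear_image': "measure lebesgue (f ` S) = \<bar>det (matrix f)\<bar> * measure lebesgue S" (is "?Q f S")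
proof -
  have "\<forall>S \<in> lmeasurable. (f ` S) \<in> lmeasurable \<and> ?Q f S"
  proof (rule induct_linear_elementary [OF \<open>linear f\<close>]; intro ballI)
    fix f g and S :: "(real,'n) vec set"
    assume "linear f" and "linear g"
      and f [rule_format]: "\<forall>S \<in> lmeasurable. f ` S \<in> lmeasurable \<and> ?Q f S"
      and g [rule_format]: "\<forall>S \<in> lmeasurable. g ` S \<in> lmeasurable \<and> ?Q g S"
      and S: "S \<in> lmeasurable"
    then have gS: "g ` S \<in> lmeasurable"
      by blast
    show "(f \<circ> g) ` S \<in> lmeasurable \<and> ?Q (f \<circ> g) S"
      using f [OF gS] g [OF S] matrix_compose [OF \<open>linear g\<close> \<open>linear f\<close>]
      by (simp add: o_def image_comp abs_mult det_mul)
  next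
    fix f :: "real^'n::_ \<Rightarrow> real^'n::_" and i and S :: "(real^'n::_) set"
    assume "linear f" and 0: "\<And>x. f x $ i = 0" and "S \<in> lmeasurable"
    then have "\<not> inj f"
      by (metis (full_types) linear_injective_imp_surjective one_neq_zero surjE vec_component)
    have detf: "det (matrix f) = 0"
      using \<open>\<not> inj f\<close> det_nz_iff_inj[OF \<open>linear f\<close>] by blast
    show "f ` S \<in> lmeasurable \<and> ?Q f S"
    proof
      show "f ` S \<in> lmeasurable"
        using lmeasurable_iff_indicator_has_integral \<open>linear f\<close> \<open>\<not> inj f\<close> negligible_UNIV negligible_linear_singular_image by blast
      have "measure lebesgue (f ` S) = 0"
        by (meson \<open>\<not> inj f\<close> \<open>linear f\<close> negligible_imp_measure0 negligible_linear_singular_image)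
      also have "\<dots> = \<bar>det (matrix f)\<bar> * measure lebesgue S"
        by (simp add: detf)
      finally show "?Q f S" .
    qed
  next
    fix c and S :: "(real^'n::_) set"
    assume "S \<in> lmeasurable"
    show "(\<lambda>a. \<chi> i. c i * a $ i) ` S \<in> lmeasurable \<and> ?Q (\<lambda>a. \<chi> i. c i * a $ i) S"
    proof
      show "(\<lambda>a. \<chi> i. c i * a $ i) ` S \<in> lmeasurable"
        by (simp add: \<open>S \<in> lmeasurable\<close> measurable_stretch)
      show "?Q (\<lambda>a. \<chi> i. c i * a $ i) S"
        by (simp add: measure_stretch [OF \<open>S \<in> lmeasurable\<close>, of c] axis_def matrix_def det_diagonal)
    qed
  next
    fix m :: "'n" and n :: "'n" and S :: "(real, 'n) vec set"
    assume "m \<noteq> n" and "S \<in> lmeasurable"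
    let ?h = "\<lambda>v::(real, 'n) vec. \<chi> i. v $ Transposition.transpose m n i"
    have lin: "linear ?h"
      by (rule linearI) (simp_all add: plus_vec_def scaleR_vec_def)
    have meq: "measure lebesgue ((\<lambda>v::(real, 'n) vec. \<chi> i. v $ Transposition.transpose m n i) ` cbox a b)
             = measure lebesgue (cbox a b)" for a b
    proof (cases "cbox a b = {}")
      case True then show ?thesis
        by simp
    next
      case False
      then have him: "?h ` (cbox a b) \<noteq> {}"
        by blast
      have eq: "?h ` (cbox a b) = cbox (?h a) (?h b)"
        by (auto simp: image_iff lambda_swap_Galois mem_box_cart) (metis transpose_involutory)+
      show ?thesis
        using him prod.permute [OF permutes_swap_id, where S=UNIV and g="\<lambda>i. (b - a)$i", symmetric]
        by (simp add: eq content_cbox_cart False)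
    qed
    have "(\<chi> i j. if Transposition.transpose m n i = j then 1 else 0) = (\<chi> i j. if j = Transposition.transpose m n i then 1 else (0::real))"
      by (auto intro!: Cart_lambda_cong)
    then have "matrix ?h = transpose(\<chi> i j. mat 1 $ i $ Transposition.transpose m n j)"
      by (auto simp: matrix_eq transpose_def axis_def mat_def matrix_def)
    then have 1: "\<bar>det (matrix ?h)\<bar> = 1"
      by (simp add: det_permute_columns permutes_swap_id sign_swap_id abs_mult)
    show "?h ` S \<in> lmeasurable \<and> ?Q ?h S"
      using measure_linear_sufficient [OF lin \<open>S \<in> lmeasurable\<close>] meq 1 by force
  next
    fix m n :: "'n" and S :: "(real, 'n) vec set"
    assume "m \<noteq> n" and "S \<in> lmeasurable"
    let ?h = "\<lambda>v::(real, 'n) vec. \<chi> i. if i = m then v $ m + v $ n else v $ i"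
    have lin: "linear ?h"
      by (rule linearI) (auto simp: algebra_simps plus_vec_def scaleR_vec_def vec_eq_iff)
    have "matrix ?h = (\<chi> k. if k = m then row m (mat 1) + 1 *s row n (mat 1) else row k (mat 1))"
      by (auto simp: matrix_def row_def mat_def axis_def vec_eq_iff)
    then have 1: "det(matrix ?h) = 1"
      using det_row_operation[OF \<open>m \<noteq> n\<close>, of "mat 1" 1] by (simp add: det_I)
    have meq: "measure lebesgue (?h ` (cbox a b)) = measure lebesgue (cbox a b)" for a b
    proof (cases "cbox a b = {}")
      case True then show ?thesis by simp
    next
      case False
      then have ne: "(+) (\<chi> i. if i = n then - a $ n else 0) ` cbox a b \<noteq> {}"
        by auto
      let ?v = "\<chi> i. if i = n then - a $ n else 0"
      have "?h ` cbox a b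
            = (+) (\<chi> i. if i = m \<or> i = n then a $ n else 0) ` ?h ` (+) ?v ` (cbox a b)"
        using \<open>m \<noteq> n\<close> unfolding image_comp o_def by (force simp: vec_eq_iff)
      then have "measure lebesgue (?h ` (cbox a b))
               = measure lebesgue ((\<lambda>v. \<chi> i. if i = m then v $ m + v $ n else v $ i) `
                                   (+) ?v ` cbox a b)"
        by (rule ssubst) (rule measure_translation)
      also have "\<dots> = measure lebesgue ((\<lambda>v. \<chi> i. if i = m then v $ m + v $ n else v $ i) ` cbox (?v +a) (?v + b))"
        by (metis (no_types, lifting) cbox_translation)
      also have "\<dots> = measure lebesgue ((+) ?v ` cbox a b)"
        apply (subst measure_shear_interval)
        using \<open>m \<noteq> n\<close> ne apply auto
        apply (simp add: cbox_translation)
        by (metis cbox_borel cbox_translation measure_completion sets_lborel)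
      also have "\<dots> = measure lebesgue (cbox a b)"
        by (rule measure_translation)
        finally show ?thesis .
      qed
    show "?h ` S \<in> lmeasurable \<and> ?Q ?h S"
      using measure_linear_sufficient [OF lin \<open>S \<in> lmeasurable\<close>] meq 1 by force
  qed
  with assms show "(f ` S) \<in> lmeasurable" "?Q f S"
    by metis+
qed

lemma lborel_orth_invariant:
  fixes Q :: "real^'n::finite \<Rightarrow> real^'n"
  assumes oQ: "orthogonal_transformation Q" and inv: "\<And>x. Q (Q x) = x"
  shows "distr lborel borel Q = lborel"
proof -
  have lin: "linear Q" using oQ by (simp add: orthogonal_transformation_def)
  have Qm: "Q \<in> borel_measurable borel"
    by (intro borel_measurable_continuous_onI linear_continuous_on) (use lin linear_linear in blast)
  show ?thesis
  proof (rule lborel_eqI[symmetric])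
    fix l u :: "real^'n" assume lu: "\<And>b. b \<in> Basis \<Longrightarrow> l \<bullet> b \<le> u \<bullet> b"
    have pre: "Q -` box l u = Q ` box l u"
      using inv by (auto simp: image_iff) (metis)
    have bor: "Q ` box l u \<in> sets borel"
      using measurable_sets[OF Qm, of "box l u"] pre by simp
    have bdd: "bounded (Q ` box l u)"
      by (intro bounded_linear_image bounded_box) (use lin linear_linear in blast)
    have lm: "box l u \<in> lmeasurable" by simp
    have "measure lborel (Q ` box l u) = measure lebesgue (Q ` box l u)"
      using bor by simp
    also have "\<dots> = \<bar>det (matrix Q)\<bar> * measure lebesgue (box l u)"
      by (rule measure_linear_image'[OF lin lm])
    also have "\<dots> = measure lborel (box l u)" using oQ by simp
    finally have meq: "measure lborel (Q ` box l u) = measure lborel (box l u)" .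
    have "emeasure (distr lborel borel Q) (box l u) = emeasure lborel (Q ` box l u)"
    proof -
      have Qm': "Q \<in> measurable lborel borel" using Qm by simp
      show ?thesis by (subst emeasure_distr[OF Qm']) (auto simp: pre)
    qed
    also have "\<dots> = ennreal (measure lborel (Q ` box l u))"
      using emeasure_bounded_finite[OF bdd] by (intro emeasure_eq_ennreal_measure) auto
    also have "\<dots> = emeasure lborel (box l u)"
      using meq emeasure_bounded_finite[OF bounded_box, of l u] by (simp add: emeasure_eq_ennreal_measure)
    finally show "emeasure (distr lborel borel Q) (box l u) = (\<Prod>b\<in>Basis. (u - l) \<bullet> b)"
      using lu by simp
  qed simp
qed

lemma sphere_nn_integral:
  assumes gm: "g \<in> borel_measurable (borel :: (real^'d) measure)"
  shows "(\<integral>\<^sup>+ \<sigma>. g \<sigma> \<partial>(sphere_measure :: (real^'d) measure))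
       = ennreal (real CARD('d)) * (\<integral>\<^sup>+ x. indicator (ball 0 1) x * g (sgn x) \<partial>lborel)"
proof -
  let ?D = "distr (density lborel (indicator (ball (0::real^'d) 1))) borel sgn"
  have sD: "sets ?D = sets borel" by simp
  have gm': "g \<in> borel_measurable ?D"
    by (subst measurable_cong_sets[OF sD refl]) (rule gm)
  have "(\<integral>\<^sup>+ \<sigma>. g \<sigma> \<partial>(sphere_measure :: (real^'d) measure)) = (\<integral>\<^sup>+ \<sigma>. ennreal (real CARD('d)) * g \<sigma> \<partial>?D)"
    unfolding sphere_measure_def by (rule nn_integral_density) (simp, rule gm')
  also have "\<dots> = ennreal (real CARD('d)) * (\<integral>\<^sup>+ \<sigma>. g \<sigma> \<partial>?D)"
    by (rule nn_integral_cmult[OF gm'])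
  also have "(\<integral>\<^sup>+ \<sigma>. g \<sigma> \<partial>?D) = (\<integral>\<^sup>+ x. g (sgn x) \<partial>density lborel (indicator (ball (0::real^'d) 1)))"
    by (rule nn_integral_distr) (auto simp: gm)
  also have "\<dots> = (\<integral>\<^sup>+ x. indicator (ball 0 1) x * g (sgn x) \<partial>lborel)"
    by (rule nn_integral_density) (auto intro: borel_measurable_indicator measurable_compose[OF sgn_meas gm])
  finally show ?thesis .
qed

definition hh' :: "real^'d \<Rightarrow> real^'d \<Rightarrow> real^'d" where
  "hh' u x = x - (2 * (x \<bullet> u) / (u \<bullet> u)) *\<^sub>R u"

lemma hh'_linear: "linear (hh' u)"
proof (rule linearI)
  fix x y c
  show "hh' u (x + y) = hh' u x + hh' u y"
    unfolding hh'_def by (simp add: inner_add_left add_divide_distrib distrib_left scaleR_add_left)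
  show "hh' u (c *\<^sub>R x) = c *\<^sub>R hh' u x"
    unfolding hh'_def by (simp add: scaleR_diff_right)
qed

lemma hh'_sym: "hh' u x \<bullet> y = x \<bullet> hh' u y"
  unfolding hh'_def by (simp add: inner_diff_left inner_diff_right inner_commute)

lemma hh'_inv: assumes "u \<noteq> 0" shows "hh' u (hh' u x) = x"
proof -
  have c: "u \<bullet> u \<noteq> 0" using assms by simp
  have "hh' u x \<bullet> u = - (x \<bullet> u)"
    unfolding hh'_def using c by (simp add: inner_diff_left)
  then show ?thesis unfolding hh'_def[of u "hh' u x"] by (simp add: hh'_def)
qed

definition hh :: "real^'d \<Rightarrow> real^'d \<Rightarrow> real^'d \<Rightarrow> real^'d" where
  "hh e e' = (if e = e' then (\<lambda>x. x) else hh' (e - e'))"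

lemma hh_linear: "linear (hh e e')"
  unfolding hh_def using hh'_linear[of "e - e'"] by (auto simp: linear_id[unfolded id_def])

lemma hh_sym: "hh e e' x \<bullet> y = x \<bullet> hh e e' y"
  unfolding hh_def by (simp add: hh'_sym)

lemma hh_inv: "hh e e' (hh e e' x) = x"
  unfolding hh_def by (simp add: hh'_inv)

lemma hh_scale: "hh e e' (c *\<^sub>R x) = c *\<^sub>R hh e e' x"
  unfolding hh_def hh'_def by (auto simp: scaleR_diff_right mult.left_commute)

lemma hh_orth: "orthogonal_transformation (hh e e')"
  unfolding orthogonal_transformation_def
  using hh_linear hh_sym hh_inv by metis

lemma hh_map: assumes "norm e = 1" "norm e' = 1" shows "hh e e' e = e'"
proof (cases "e = e'")
  case False
  let ?u = "e - e'"
  have ee: "e \<bullet> e = 1" "e' \<bullet> e' = 1" using assms by (simp_all add: power2_norm_eq_inner[symmetric])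
  have uu: "?u \<bullet> ?u = 2 * (1 - e \<bullet> e')" using ee by (simp add: inner_diff_left inner_diff_right inner_commute)
  have ne: "1 - e \<bullet> e' \<noteq> 0" using uu False by auto
  have eu: "e \<bullet> ?u = 1 - e \<bullet> e'" using ee by (simp add: inner_diff_right)
  have one: "2 * (e \<bullet> ?u) / (?u \<bullet> ?u) = 1" unfolding uu eu using ne by simp
  have "hh e e' e = e - (2 * (e \<bullet> ?u) / (?u \<bullet> ?u)) *\<^sub>R ?u" unfolding hh_def hh'_def using False by simp
  also have "\<dots> = e'" unfolding one by simp
  finally show ?thesis .
qed (simp add: hh_def)

lemma sphere_b_invariant:
  fixes e e' :: "real^'d"
  assumes bm[measurable]: "b \<in> borel_measurable borel" and e: "norm e = 1" "norm e' = 1"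
  shows "(\<integral>\<^sup>+ \<sigma>. ennreal (b (\<sigma> \<bullet> e)) \<partial>(sphere_measure :: (real^'d) measure))
       = (\<integral>\<^sup>+ \<sigma>. ennreal (b (\<sigma> \<bullet> e')) \<partial>(sphere_measure :: (real^'d) measure))"
proof -
  let ?Q = "hh e' e"
  have Qm0: "?Q \<in> borel_measurable borel"
    by (intro borel_measurable_continuous_onI linear_continuous_on) (use hh_linear linear_linear in blast)
  then have Qm: "?Q \<in> measurable lborel borel" by simp
  have F1: "(\<lambda>x::real^'d. sgn x \<bullet> e) \<in> borel_measurable borel" by measurable
  have F2: "(\<lambda>x::real^'d. b (sgn x \<bullet> e)) \<in> borel_measurable borel"
    using measurable_comp[OF F1 bm] by (simp add: o_def)
  have F: "(\<lambda>x. indicator (ball 0 1) x * ennreal (b (sgn x \<bullet> e))) \<in> borel_measurable (borel :: (real^'d) measure)"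
    using F2 by (intro borel_measurable_times_ennreal borel_measurable_indicator measurable_compose[OF F2]) auto
  have nQ: "\<And>x. norm (?Q x) = norm x" using hh_orth orthogonal_transformation_norm by blast
  have sQ: "\<And>x. sgn (?Q x) = ?Q (sgn x)"
    by (simp add: sgn_div_norm nQ hh_scale)
  have Qe: "?Q e = e'" using hh_map[OF e(2) e(1)] hh_inv by metis
  have "(\<integral>\<^sup>+ x. indicator (ball 0 1) x * ennreal (b (sgn x \<bullet> e)) \<partial>lborel)
     = (\<integral>\<^sup>+ x. indicator (ball 0 1) x * ennreal (b (sgn x \<bullet> e)) \<partial>distr lborel borel ?Q)"
    by (simp add: lborel_orth_invariant[OF hh_orth hh_inv])
  also have "\<dots> = (\<integral>\<^sup>+ x. indicator (ball 0 1) (?Q x) * ennreal (b (sgn (?Q x) \<bullet> e)) \<partial>lborel)"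
    by (rule nn_integral_distr[OF Qm]) (use F in simp)
  also have "\<dots> = (\<integral>\<^sup>+ x. indicator (ball 0 1) x * ennreal (b (sgn x \<bullet> e')) \<partial>lborel)"
    by (intro nn_integral_cong) (simp add: nQ sQ hh_sym Qe indicator_def)
  finally show ?thesis
    by (simp add: sphere_nn_integral)
qed

lemma gauss_finite: "(\<integral>\<^sup>+ t. ennreal (exp (- t\<^sup>2 / 4)) \<partial>lborel) < \<infinity>"
proof -
  have nd: "\<And>t. exp (- t\<^sup>2 / 4) = sqrt (4 * pi) * normal_density 0 (sqrt 2) t"
    by (simp add: normal_density_def real_sqrt_mult)
  have "(\<integral>\<^sup>+ t. ennreal (exp (- t\<^sup>2 / 4)) \<partial>lborel) = (\<integral>\<^sup>+ t. ennreal (sqrt (4 * pi)) * ennreal (normal_density 0 (sqrt 2) t) \<partial>lborel)"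
  proof (intro nn_integral_cong)
    fix t :: real
    show "ennreal (exp (- t\<^sup>2 / 4)) = ennreal (sqrt (4 * pi)) * ennreal (normal_density 0 (sqrt 2) t)"
      by (simp only: nd, rule ennreal_mult) auto
  qed
  also have "\<dots> = ennreal (sqrt (4 * pi)) * (\<integral>\<^sup>+ t. ennreal (normal_density 0 (sqrt 2) t) \<partial>lborel)"
    by (rule nn_integral_cmult) measurable
  also have "(\<integral>\<^sup>+ t. ennreal (normal_density 0 (sqrt 2) t) \<partial>lborel) < \<infinity>"
  proof -
    have "(\<integral>\<^sup>+ t. ennreal (norm (normal_density 0 (sqrt 2) t)) \<partial>lborel) < \<infinity>"
      using integrable_normal_density[where \<mu>=0 and \<sigma>="sqrt 2"] unfolding integrable_iff_bounded by simp
    moreover have "(\<integral>\<^sup>+ t. ennreal (norm (normal_density 0 (sqrt 2) t)) \<partial>lborel) = (\<integral>\<^sup>+ t. ennreal (normal_density 0 (sqrt 2) t) \<partial>lborel)"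
      by (intro nn_integral_cong) simp
    ultimately show ?thesis by simp
  qed
  then have "ennreal (sqrt (4 * pi)) * (\<integral>\<^sup>+ t. ennreal (normal_density 0 (sqrt 2) t) \<partial>lborel) < \<infinity>"
    by (simp add: ennreal_mult_less_top)
  finally show ?thesis .
qed

lemma gauss_finite_vec: "(\<integral>\<^sup>+ x. ennreal (exp (- (norm x)\<^sup>2 / 4)) \<partial>(lborel :: (real^'d) measure)) < \<infinity>"
proof -
  have eq: "\<And>x::real^'d. ennreal (exp (- (norm x)\<^sup>2 / 4)) = (\<Prod>b\<in>Basis. ennreal (exp (- (x \<bullet> b)\<^sup>2 / 4)))"
  proof -
    fix x :: "real^'d"
    have "(norm x)\<^sup>2 = x \<bullet> x" by (rule power2_norm_eq_inner)
    also have "\<dots> = (\<Sum>b\<in>Basis. (x \<bullet> b)\<^sup>2)"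
      by (subst euclidean_inner) (simp add: power2_eq_square)
    finally have "(norm x)\<^sup>2 = (\<Sum>b\<in>Basis. (x \<bullet> b)\<^sup>2)" .
    then have "exp (- (norm x)\<^sup>2 / 4) = (\<Prod>b\<in>Basis. exp (- (x \<bullet> b)\<^sup>2 / 4))"
      by (simp add: exp_sum[symmetric] sum_negf sum_divide_distrib)
    then show "ennreal (exp (- (norm x)\<^sup>2 / 4)) = (\<Prod>b\<in>Basis. ennreal (exp (- (x \<bullet> b)\<^sup>2 / 4)))"
      by (simp add: prod_ennreal)
  qed
  have "(\<integral>\<^sup>+ x. ennreal (exp (- (norm x)\<^sup>2 / 4)) \<partial>(lborel :: (real^'d) measure))
      = (\<Prod>b\<in>(Basis :: (real^'d) set). (\<integral>\<^sup>+ t. ennreal (exp (- t\<^sup>2 / 4)) \<partial>lborel))"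
    unfolding eq by (rule nn_integral_lborel_prod) auto
  also have "\<dots> < \<infinity>"
    using gauss_finite by (simp add: less_top[symmetric] power_eq_top_ennreal)
  finally show ?thesis .
qed

lemma powr_exp_bound: fixes y g :: real assumes "y \<ge> 0" "g \<ge> 0" shows "y powr g \<le> exp (g * y)"
proof (cases "y = 0")
  case False
  then have "y powr g = exp (g * ln y)" using assms by (simp add: powr_def mult.commute)
  also have "\<dots> \<le> exp (g * y)"
    using assms False ln_le_minus_one[of y] by (intro exp_mono mult_left_mono) auto
  finally show ?thesis .
qed simp

lemma maxw_le: "maxwellian (v::real^'d) \<le> exp (- (norm v)\<^sup>2 / 2)"
proof -
  have "(2 * pi) powr (- real CARD('d) / 2) \<le> 1"
  proof -
    have "(2 * pi) powr (- real CARD('d) / 2) \<le> (2 * pi) powr 0"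
      using pi_gt3 by (intro powr_mono) auto
    then show ?thesis using pi_gt3 by simp
  qed
  then show ?thesis unfolding maxwellian_def by (intro mult_left_le_one_le) auto
qed

lemma a_bound:
  fixes v vs :: "real^'d" and \<gamma> V :: real
  assumes g: "\<gamma> \<ge> 0" and v: "norm v \<le> V"
  shows "norm (v - vs) powr \<gamma> * maxwellian vs \<le> exp (\<gamma> * V + \<gamma>\<^sup>2) * exp (- (norm vs)\<^sup>2 / 4)"
proof -
  let ?r = "norm vs"
  have V0: "V \<ge> 0" using v norm_ge_zero order_trans by blast
  have "norm (v - vs) \<le> V + ?r" using v norm_triangle_ineq4[of v vs] by linarith
  then have "norm (v - vs) powr \<gamma> \<le> (V + ?r) powr \<gamma>" using g by (intro powr_mono2) auto
  also have "\<dots> \<le> exp (\<gamma> * (V + ?r))" using g V0 by (intro powr_exp_bound) auto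
  finally have p: "norm (v - vs) powr \<gamma> \<le> exp (\<gamma> * (V + ?r))" .
  have "norm (v - vs) powr \<gamma> * maxwellian vs \<le> exp (\<gamma> * (V + ?r)) * exp (- ?r\<^sup>2 / 2)"
    using p maxw_le[of vs] by (intro mult_mono) (auto simp: maxwellian_def)
  also have "\<dots> = exp (\<gamma> * (V + ?r) - ?r\<^sup>2 / 2)" by (simp add: exp_add[symmetric])
  also have "\<dots> \<le> exp (\<gamma> * V + \<gamma>\<^sup>2 - ?r\<^sup>2 / 4)"
  proof -
    have "0 \<le> (\<gamma> - ?r / 2)\<^sup>2" by simp
    then have "\<gamma> * ?r \<le> \<gamma>\<^sup>2 + ?r\<^sup>2 / 4" by (simp add: power2_eq_square algebra_simps)
    then show ?thesis by (intro exp_le_cancel_iff[THEN iffD2]) (simp add: algebra_simps)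
  qed
  also have "\<dots> = exp (\<gamma> * V + \<gamma>\<^sup>2) * exp (- ?r\<^sup>2 / 4)" by (simp add: exp_add[symmetric])
  finally show ?thesis .
qed

lemma kappa_bound:
  fixes \<gamma> V :: real and b :: "real \<Rightarrow> real"
  assumes g: "\<gamma> \<ge> 0" and bpos: "\<forall>s. 0 \<le> b s" and bm[measurable]: "b \<in> borel_measurable borel"
    and bint: "\<forall>e::real^'d. norm e = 1 \<longrightarrow> integrable sphere_measure (\<lambda>\<sigma>. b (\<sigma> \<bullet> e))"
  shows "\<exists>C>0. \<forall>v::real^'d. norm v \<le> V \<longrightarrow> coll_freq \<gamma> b v \<le> C"
proof -
  define e0 :: "real^'d" where "e0 = (SOME i. i \<in> Basis)"
  have ne0: "norm e0 = 1" unfolding e0_def by simp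
  define G0 where "G0 = (\<integral>\<^sup>+ \<sigma>. ennreal (b (\<sigma> \<bullet> e0)) \<partial>(sphere_measure :: (real^'d) measure))"
  have G0f: "G0 < \<infinity>"
  proof -
    have "(\<integral>\<^sup>+ \<sigma>. ennreal (norm (b (\<sigma> \<bullet> e0))) \<partial>(sphere_measure :: (real^'d) measure)) < \<infinity>"
      using bint ne0 unfolding integrable_iff_bounded by blast
    moreover have "(\<integral>\<^sup>+ \<sigma>. ennreal (norm (b (\<sigma> \<bullet> e0))) \<partial>(sphere_measure :: (real^'d) measure)) = G0"
      unfolding G0_def using bpos by (intro nn_integral_cong) simp
    ultimately show ?thesis by simp
  qed
  have inv: "\<And>e::real^'d. norm e = 1 \<Longrightarrow> (\<integral>\<^sup>+ \<sigma>. ennreal (b (\<sigma> \<bullet> e)) \<partial>(sphere_measure :: (real^'d) measure)) = G0"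
    unfolding G0_def by (rule sphere_b_invariant[OF bm _ ne0])
  define K where "K = exp (\<gamma> * V + \<gamma>\<^sup>2)"
  define Z where "Z = (\<integral>\<^sup>+ x. ennreal (exp (- (norm x)\<^sup>2 / 4)) \<partial>(lborel :: (real^'d) measure))"
  have Zf: "Z < \<infinity>" unfolding Z_def by (rule gauss_finite_vec)
  define C0 where "C0 = enn2real (ennreal K * Z * G0)"
  have fin: "ennreal K * Z * G0 < \<infinity>" using Zf G0f by (simp add: ennreal_mult_less_top)
  have bnd: "coll_freq \<gamma> b v \<le> C0" if v: "norm v \<le> V" for v :: "real^'d"
  proof -
    have pw: "(\<integral>\<^sup>+ \<sigma>. ennreal (kernel \<gamma> b v vs \<sigma> * maxwellian vs) \<partial>(sphere_measure :: (real^'d) measure))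
        \<le> ennreal (K * exp (- (norm vs)\<^sup>2 / 4)) * G0" for vs
    proof (cases "vs = v")
      case True
      then show ?thesis by (simp add: kernel_def)
    next
      case False
      let ?e = "sgn (v - vs)"
      let ?a = "norm (v - vs) powr \<gamma> * maxwellian vs"
      have ne: "norm ?e = 1" using False by (simp add: norm_sgn)
      have a0: "?a \<ge> 0" by (simp add: maxwellian_def)
      have sm: "(\<lambda>\<sigma>. ennreal (b (\<sigma> \<bullet> ?e))) \<in> borel_measurable (sphere_measure :: (real^'d) measure)"
        by (subst measurable_cong_sets[OF sets_sphere refl]) measurable
      have "(\<integral>\<^sup>+ \<sigma>. ennreal (kernel \<gamma> b v vs \<sigma> * maxwellian vs) \<partial>(sphere_measure :: (real^'d) measure))
          = (\<integral>\<^sup>+ \<sigma>. ennreal ?a * ennreal (b (\<sigma> \<bullet> ?e)) \<partial>(sphere_measure :: (real^'d) measure))"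
        using a0 bpos by (intro nn_integral_cong) (simp add: kernel_def ennreal_mult[symmetric] mult_ac)
      also have "\<dots> = ennreal ?a * G0" using nn_integral_cmult[OF sm, of "ennreal ?a"] inv[OF ne] by simp
      also have "\<dots> \<le> ennreal (K * exp (- (norm vs)\<^sup>2 / 4)) * G0"
        using a_bound[OF g v, of vs] unfolding K_def by (intro mult_right_mono ennreal_leI) auto
      finally show ?thesis .
    qed
    have "(\<integral>\<^sup>+ vs. \<integral>\<^sup>+ \<sigma>. ennreal (kernel \<gamma> b v vs \<sigma> * maxwellian vs) \<partial>sphere_measure \<partial>lborel)
       \<le> (\<integral>\<^sup>+ vs. ennreal K * ennreal (exp (- (norm vs)\<^sup>2 / 4)) * G0 \<partial>(lborel :: (real^'d) measure))"
    proof (intro nn_integral_mono)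
      fix vs :: "real^'d"
      have "ennreal (K * exp (- (norm vs)\<^sup>2 / 4)) = ennreal K * ennreal (exp (- (norm vs)\<^sup>2 / 4))"
        by (rule ennreal_mult) (auto simp: K_def)
      then show "(\<integral>\<^sup>+ \<sigma>. ennreal (kernel \<gamma> b v vs \<sigma> * maxwellian vs) \<partial>sphere_measure) \<le> ennreal K * ennreal (exp (- (norm vs)\<^sup>2 / 4)) * G0"
        using pw[of vs] by simp
    qed
    also have "\<dots> = ennreal K * Z * G0"
      unfolding Z_def by (simp add: nn_integral_multc nn_integral_cmult)
    finally have le: "(\<integral>\<^sup>+ vs. \<integral>\<^sup>+ \<sigma>. ennreal (kernel \<gamma> b v vs \<sigma> * maxwellian vs) \<partial>sphere_measure \<partial>lborel) \<le> ennreal K * Z * G0" .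
    show ?thesis unfolding coll_freq_def C0_def using le fin by (intro enn2real_mono) auto
  qed
  show ?thesis
  proof (rule exI[of _ "C0 + 1"], intro conjI allI impI)
    have "C0 \<ge> 0" unfolding C0_def by (rule enn2real_nonneg)
    then show "C0 + 1 > 0" by simp
    fix v :: "real^'d" assume "norm v \<le> V"
    then show "coll_freq \<gamma> b v \<le> C0 + 1" using bnd by fastforce
  qed
qed

locale ham =
  fixes \<Phi> :: "real^'d \<Rightarrow> real" and grad :: "real^'d \<Rightarrow> real^'d" and D2 :: "real^'d \<Rightarrow> ((real^'d) \<Rightarrow>\<^sub>L (real^'d))"
    and Fl :: "real \<Rightarrow> ('d::finite) state \<Rightarrow> 'd state" and m :: real
  assumes dPhi: "\<And>x. (\<Phi> has_derivative (\<lambda>h. grad x \<bullet> h)) (at x)"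
    and dgrad: "\<And>x. (grad has_derivative blinfun_apply (D2 x)) (at x)"
    and cD2: "continuous_on UNIV D2"
    and mlow: "\<And>x. m \<le> \<Phi> x"
    and Fl0: "\<And>z. Fl 0 z = z"
    and dFl: "\<And>z t. ((\<lambda>\<tau>. Fl \<tau> z) has_vector_derivative (snd (Fl t z), - grad (fst (Fl t z)))) (at t)"
begin

definition HH :: "'d state \<Rightarrow> real" where "HH z = \<Phi> (fst z) + (norm (snd z))\<^sup>2 / 2"

lemma dFl': "((\<lambda>\<tau>. Fl \<tau> z) has_derivative (\<lambda>s. s *\<^sub>R (snd (Fl t z), - grad (fst (Fl t z))))) (at t)"
  using dFl[of z t] by (simp add: has_vector_derivative_def)

lemma dx: "((\<lambda>\<tau>. fst (Fl \<tau> z)) has_derivative (\<lambda>s. s *\<^sub>R snd (Fl t z))) (at t)"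
  using has_derivative_fst[OF dFl'[of z t]] by simp

lemma dv: "((\<lambda>\<tau>. snd (Fl \<tau> z)) has_derivative (\<lambda>s. s *\<^sub>R (- grad (fst (Fl t z))))) (at t)"
  using has_derivative_snd[OF dFl'[of z t]] by simp

lemma energy: "HH (Fl t z) = HH z"
proof -
  have d: "((\<lambda>\<tau>. HH (Fl \<tau> z)) has_derivative (\<lambda>h. 0)) (at x)" for x
  proof -
    let ?x = "fst (Fl x z)" and ?v = "snd (Fl x z)"
    have h1: "((\<lambda>\<tau>. \<Phi> (fst (Fl \<tau> z))) has_derivative (\<lambda>s. grad ?x \<bullet> (s *\<^sub>R ?v))) (at x)"
      by (rule has_derivative_compose[OF dx dPhi])
    have h2: "((\<lambda>\<tau>. snd (Fl \<tau> z) \<bullet> snd (Fl \<tau> z)) has_derivative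
         (\<lambda>s. ?v \<bullet> (s *\<^sub>R (- grad ?x)) + (s *\<^sub>R (- grad ?x)) \<bullet> ?v)) (at x)"
      by (rule has_derivative_inner[OF dv dv])
    have h3: "((\<lambda>\<tau>. \<Phi> (fst (Fl \<tau> z)) + (snd (Fl \<tau> z) \<bullet> snd (Fl \<tau> z)) / 2) has_derivative
         (\<lambda>s. grad ?x \<bullet> (s *\<^sub>R ?v) + (?v \<bullet> (s *\<^sub>R (- grad ?x)) + (s *\<^sub>R (- grad ?x)) \<bullet> ?v) / 2)) (at x)"
      by (intro has_derivative_add h1 bounded_linear.has_derivative[OF bounded_linear_divide h2])
    have eqf: "(\<lambda>\<tau>. HH (Fl \<tau> z)) = (\<lambda>\<tau>. \<Phi> (fst (Fl \<tau> z)) + (snd (Fl \<tau> z) \<bullet> snd (Fl \<tau> z)) / 2)"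
      by (simp add: HH_def power2_norm_eq_inner)
    have eqd: "(\<lambda>s. grad ?x \<bullet> (s *\<^sub>R ?v) + (?v \<bullet> (s *\<^sub>R (- grad ?x)) + (s *\<^sub>R (- grad ?x)) \<bullet> ?v) / 2) = (\<lambda>h. 0)"
      by (simp add: fun_eq_iff inner_commute)
    show ?thesis using h3 unfolding eqf eqd .
  qed
  have "\<exists>c. \<forall>x\<in>UNIV. HH (Fl x z) = c"
    by (rule has_derivative_zero_constant[where s=UNIV]) (use d in auto)
  then obtain c where "\<And>x. HH (Fl x z) = c" by auto
  then have "HH (Fl t z) = HH (Fl 0 z)" by simp
  then show ?thesis by (simp add: Fl0)
qed

lemma vbound: "norm (snd (Fl t z)) \<le> sqrt (2 * (HH z - m))"
proof -
  have "(norm (snd (Fl t z)))\<^sup>2 / 2 \<le> HH z - m"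
    using energy[of t z] mlow[of "fst (Fl t z)"] unfolding HH_def by linarith
  then show ?thesis by (intro real_le_rsqrt) simp
qed

lemma xbound: "norm (fst (Fl t z) - fst z) \<le> sqrt (2 * (HH z - m)) * \<bar>t\<bar>"
proof -
  let ?S = "closed_segment 0 t"
  have "norm ((\<lambda>\<tau>. fst (Fl \<tau> z)) t - (\<lambda>\<tau>. fst (Fl \<tau> z)) 0) \<le> sqrt (2 * (HH z - m)) * norm (t - 0)"
  proof (rule differentiable_bound[where f'="\<lambda>\<tau> s. s *\<^sub>R snd (Fl \<tau> z)"])
    show "convex ?S" by simp
    show "((\<lambda>\<tau>. fst (Fl \<tau> z)) has_derivative (\<lambda>s. s *\<^sub>R snd (Fl x z))) (at x within ?S)" for x
      using dx has_derivative_at_withinI by blast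
    show "onorm (\<lambda>s. s *\<^sub>R snd (Fl x z)) \<le> sqrt (2 * (HH z - m))" if "x \<in> ?S" for x
      using onorm_scaleR_left[OF bounded_linear_ident, of "snd (Fl x z)"] vbound[of x z]
      by (simp add: onorm_id)
  qed auto
  then show ?thesis by (simp add: Fl0)
qed

end

context ham begin

abbreviation FF :: "'d state \<Rightarrow> 'd state" where "FF y \<equiv> (snd y, - grad (fst y))"

lemma lipF: "\<exists>L\<ge>0. \<forall>y1 y2. norm y1 \<le> R \<longrightarrow> norm y2 \<le> R \<longrightarrow> norm (FF y1 - FF y2) \<le> L * norm (y1 - y2)"
proof -
  have "compact (D2 ` cball 0 R)"
    by (rule compact_continuous_image) (rule continuous_on_subset[OF cD2], simp_all)
  then have "bounded (D2 ` cball 0 R)" by (rule compact_imp_bounded)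
  then obtain B where B0: "\<forall>y\<in>D2 ` cball 0 R. norm y \<le> B" unfolding bounded_iff by blast
  have B: "\<And>x. x \<in> cball 0 R \<Longrightarrow> norm (D2 x) \<le> B" using B0 by blast
  have gL: "norm (grad x1 - grad x2) \<le> B * norm (x1 - x2)" if "x1 \<in> cball 0 R" "x2 \<in> cball 0 R" for x1 x2
  proof (rule differentiable_bound[where f'="\<lambda>x. blinfun_apply (D2 x)" and S="cball 0 R"])
    show "convex (cball (0::real^'d) R)" by simp
    show "(grad has_derivative blinfun_apply (D2 x)) (at x within cball 0 R)" for x
      using dgrad has_derivative_at_withinI by blast
    show "onorm (blinfun_apply (D2 x)) \<le> B" if "x \<in> cball 0 R" for x
      using B[OF that] by (simp add: norm_blinfun.rep_eq)
  qed (rule that(1), rule that(2))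
  show ?thesis
  proof (intro exI[of _ "1 + max B 0"] conjI allI impI)
    show "0 \<le> 1 + max B 0" by simp
    fix y1 y2 :: "'d state" assume y: "norm y1 \<le> R" "norm y2 \<le> R"
    have f1: "norm (fst y1) \<le> R" "norm (fst y2) \<le> R"
      using y norm_fst_le[of "fst y1" "snd y1"] norm_fst_le[of "fst y2" "snd y2"] by simp_all
    have "norm (fst (y1 - y2)) \<le> norm (y1 - y2)"
      using norm_fst_le[of "fst (y1 - y2)" "snd (y1 - y2)"] by (simp only: prod.collapse)
    then have dd1: "norm (fst y1 - fst y2) \<le> norm (y1 - y2)" by simp
    have "norm (snd (y1 - y2)) \<le> norm (y1 - y2)"
      using norm_snd_le[of "snd (y1 - y2)" "fst (y1 - y2)"] by (simp only: prod.collapse)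
    then have dd2: "norm (snd y1 - snd y2) \<le> norm (y1 - y2)" by simp
    have "FF y1 - FF y2 = (snd y1 - snd y2, - (grad (fst y1) - grad (fst y2)))" by simp
    then have "norm (FF y1 - FF y2) \<le> norm (snd y1 - snd y2) + norm (grad (fst y1) - grad (fst y2))"
      using norm_Pair_le[of "snd y1 - snd y2" "- (grad (fst y1) - grad (fst y2))"] by (simp add: norm_minus_commute)
    also have "\<dots> \<le> norm (y1 - y2) + max B 0 * norm (y1 - y2)"
    proof (rule add_mono[OF dd2])
      have "norm (grad (fst y1) - grad (fst y2)) \<le> B * norm (fst y1 - fst y2)" using f1 by (intro gL) simp_all
      also have "\<dots> \<le> max B 0 * norm (fst y1 - fst y2)" by (intro mult_right_mono) simp_all
      also have "\<dots> \<le> max B 0 * norm (y1 - y2)" using dd1 by (intro mult_left_mono) simp_all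
      finally show "norm (grad (fst y1) - grad (fst y2)) \<le> max B 0 * norm (y1 - y2)" .
    qed
    finally show "norm (FF y1 - FF y2) \<le> (1 + max B 0) * norm (y1 - y2)" by (simp add: algebra_simps)
  qed
qed
lemma gronwall:
  assumes L: "L \<ge> 0"
    and lip: "\<forall>y1 y2. norm y1 \<le> R \<longrightarrow> norm y2 \<le> R \<longrightarrow> norm (FF y1 - FF y2) \<le> L * norm (y1 - y2)"
    and bnd: "\<And>\<tau>. \<bar>\<tau>\<bar> \<le> T \<Longrightarrow> norm (Fl \<tau> z1) \<le> R \<and> norm (Fl \<tau> z2) \<le> R"
    and t: "\<bar>t\<bar> \<le> T"
  shows "norm (Fl t z1 - Fl t z2) \<le> norm (z1 - z2) * exp (L * \<bar>t\<bar>)"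
proof -
  define \<delta> where "\<delta> \<tau> = Fl \<tau> z1 - Fl \<tau> z2" for \<tau>
  define \<delta>' where "\<delta>' \<tau> = FF (Fl \<tau> z1) - FF (Fl \<tau> z2)" for \<tau>
  define q where "q \<tau> = \<delta> \<tau> \<bullet> \<delta> \<tau>" for \<tau>
  have dd: "(\<delta> has_derivative (\<lambda>s. s *\<^sub>R \<delta>' \<tau>)) (at \<tau>)" for \<tau>
    unfolding \<delta>_def[abs_def] \<delta>'_def using has_derivative_diff[OF dFl'[of z1 \<tau>] dFl'[of z2 \<tau>]]
    by (simp add: scaleR_diff_right)
  have dq: "(q has_real_derivative 2 * (\<delta> \<tau> \<bullet> \<delta>' \<tau>)) (at \<tau>)" for \<tau>
  proof -
    have "(q has_derivative (\<lambda>s. \<delta> \<tau> \<bullet> (s *\<^sub>R \<delta>' \<tau>) + (s *\<^sub>R \<delta>' \<tau>) \<bullet> \<delta> \<tau>)) (at \<tau>)"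
      unfolding q_def[abs_def] by (rule has_derivative_inner[OF dd dd])
    moreover have "(\<lambda>s. \<delta> \<tau> \<bullet> (s *\<^sub>R \<delta>' \<tau>) + (s *\<^sub>R \<delta>' \<tau>) \<bullet> \<delta> \<tau>) = (*) (2 * (\<delta> \<tau> \<bullet> \<delta>' \<tau>))"
      by (auto simp: fun_eq_iff inner_commute algebra_simps)
    ultimately show ?thesis by (simp add: has_field_derivative_def)
  qed
  have qn: "q \<tau> = (norm (\<delta> \<tau>))\<^sup>2" for \<tau> by (simp add: q_def power2_norm_eq_inner)
  have ib: "\<bar>\<delta> \<tau> \<bullet> \<delta>' \<tau>\<bar> \<le> L * q \<tau>" if "\<bar>\<tau>\<bar> \<le> T" for \<tau>
  proof -
    have "\<bar>\<delta> \<tau> \<bullet> \<delta>' \<tau>\<bar> \<le> norm (\<delta> \<tau>) * norm (\<delta>' \<tau>)" by (rule Cauchy_Schwarz_ineq2)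
    also have "\<dots> \<le> norm (\<delta> \<tau>) * (L * norm (\<delta> \<tau>))"
    proof (rule mult_left_mono)
      show "norm (\<delta>' \<tau>) \<le> L * norm (\<delta> \<tau>)"
        using lip bnd[OF that] unfolding \<delta>_def \<delta>'_def by blast
    qed simp
    finally show ?thesis by (simp add: qn power2_eq_square mult_ac)
  qed
  have q0: "q 0 = (norm (z1 - z2))\<^sup>2" by (simp add: qn \<delta>_def Fl0)
  have key: "q t \<le> (norm (z1 - z2))\<^sup>2 * exp (2 * L * \<bar>t\<bar>)"
  proof (cases "t \<ge> 0")
    case True
    define g where "g \<tau> = q \<tau> * exp (- 2 * L * \<tau>)" for \<tau>
    have "g t \<le> g 0"
    proof (rule DERIV_nonpos_imp_nonincreasing[OF True])
      fix x assume x: "0 \<le> x" "x \<le> t"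
      have e1: "((\<lambda>\<tau>. exp (- 2 * L * \<tau>)) has_real_derivative exp (- 2 * L * x) * (- 2 * L)) (at x)"
        by (rule DERIV_fun_exp) (rule DERIV_cmult_Id)
      have "(g has_real_derivative (2 * (\<delta> x \<bullet> \<delta>' x)) * exp (- 2 * L * x) + exp (- 2 * L * x) * (- 2 * L) * q x) (at x)"
        unfolding g_def[abs_def] by (rule DERIV_mult[OF dq e1])
      moreover have "(2 * (\<delta> x \<bullet> \<delta>' x)) * exp (- 2 * L * x) + exp (- 2 * L * x) * (- 2 * L) * q x \<le> 0"
      proof -
        have "\<delta> x \<bullet> \<delta>' x \<le> L * q x" using ib[of x] x t by auto
        then have "2 * (\<delta> x \<bullet> \<delta>' x) - 2 * L * q x \<le> 0" by simp
        then have "(2 * (\<delta> x \<bullet> \<delta>' x) - 2 * L * q x) * exp (- 2 * L * x) \<le> 0"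
          by (simp add: mult_nonpos_nonneg)
        then show ?thesis by (simp add: algebra_simps)
      qed
      ultimately show "\<exists>y. (g has_real_derivative y) (at x) \<and> y \<le> 0" by blast
    qed
    then have "q t * exp (- 2 * L * t) \<le> q 0" by (simp add: g_def)
    then have "q t * exp (- 2 * L * t) * exp (2 * L * t) \<le> q 0 * exp (2 * L * t)"
      by (rule mult_right_mono) simp
    moreover have "q t * exp (- 2 * L * t) * exp (2 * L * t) = q t"
      by (simp add: mult.assoc exp_add[symmetric])
    ultimately have "q t \<le> q 0 * exp (2 * L * t)" by linarith
    then show ?thesis using True q0 by simp
  next
    case False
    then have t0: "t \<le> 0" by simp
    define g where "g \<tau> = q \<tau> * exp (2 * L * \<tau>)" for \<tau>
    have "g t \<le> g 0"
    proof (rule DERIV_nonneg_imp_nondecreasing[OF t0])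
      fix x assume x: "t \<le> x" "x \<le> 0"
      have e1: "((\<lambda>\<tau>. exp (2 * L * \<tau>)) has_real_derivative exp (2 * L * x) * (2 * L)) (at x)"
        by (rule DERIV_fun_exp) (rule DERIV_cmult_Id)
      have "(g has_real_derivative (2 * (\<delta> x \<bullet> \<delta>' x)) * exp (2 * L * x) + exp (2 * L * x) * (2 * L) * q x) (at x)"
        unfolding g_def[abs_def] by (rule DERIV_mult[OF dq e1])
      moreover have "(2 * (\<delta> x \<bullet> \<delta>' x)) * exp (2 * L * x) + exp (2 * L * x) * (2 * L) * q x \<ge> 0"
      proof -
        have "- (\<delta> x \<bullet> \<delta>' x) \<le> L * q x" using ib[of x] x t by auto
        then have "2 * (\<delta> x \<bullet> \<delta>' x) + 2 * L * q x \<ge> 0" by simp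
        then have "(2 * (\<delta> x \<bullet> \<delta>' x) + 2 * L * q x) * exp (2 * L * x) \<ge> 0"
          by simp
        then show ?thesis by (simp add: algebra_simps)
      qed
      ultimately show "\<exists>y. (g has_real_derivative y) (at x) \<and> y \<ge> 0" by blast
    qed
    then have "q t * exp (2 * L * t) \<le> q 0" by (simp add: g_def)
    then have "q t * exp (2 * L * t) * exp (- (2 * L * t)) \<le> q 0 * exp (- (2 * L * t))"
      by (rule mult_right_mono) simp
    moreover have "q t * exp (2 * L * t) * exp (- (2 * L * t)) = q t"
      by (simp add: mult.assoc exp_add[symmetric])
    ultimately have "q t \<le> q 0 * exp (- (2 * L * t))" by linarith
    then show ?thesis using t0 q0 by simp
  qed
  have "(norm (z1 - z2) * exp (L * \<bar>t\<bar>))\<^sup>2 = (norm (z1 - z2))\<^sup>2 * exp (2 * L * \<bar>t\<bar>)"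
    by (simp add: power_mult_distrib exp_double[symmetric] mult_ac)
  then have "(norm (\<delta> t))\<^sup>2 \<le> (norm (z1 - z2) * exp (L * \<bar>t\<bar>))\<^sup>2"
    using key by (simp add: qn)
  then show ?thesis unfolding \<delta>_def by (rule power2_le_imp_le) simp
qed

end

context ham begin

lemma Phi_cont: "continuous_on UNIV \<Phi>"
  by (intro continuous_at_imp_continuous_on ballI has_derivative_continuous[OF dPhi])

lemma HH_cont: "continuous_on UNIV HH"
  unfolding HH_def[abs_def]
  by (intro continuous_intros continuous_on_compose2[OF Phi_cont]) auto

lemma HH_ge: "m \<le> HH z"
  using mlow[of "fst z"] unfolding HH_def by (simp add: add_increasing2)

lemma Fl_cont: "continuous_on UNIV (\<lambda>p. Fl (fst p) (snd p))"
proof (intro continuous_at_imp_continuous_on ballI)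
  fix p0 :: "real \<times> 'd state"
  obtain t0 z0 where p0: "p0 = (t0, z0)" by (cases p0)
  define T where "T = \<bar>t0\<bar> + 1"
  have "compact (HH ` cball z0 1)"
    by (rule compact_continuous_image) (rule continuous_on_subset[OF HH_cont], simp_all)
  then have "bounded (HH ` cball z0 1)" by (rule compact_imp_bounded)
  then obtain Hm where Hm0: "\<forall>y\<in>HH ` cball z0 1. norm y \<le> Hm" unfolding bounded_iff by blast
  have Hm: "HH z \<le> Hm" if "z \<in> cball z0 1" for z
  proof -
    have "norm (HH z) \<le> Hm" using Hm0 that by blast
    then show ?thesis by simp
  qed
  define Vm where "Vm = sqrt (2 * (Hm - m))"
  have vb: "norm (snd (Fl \<tau> z)) \<le> Vm" if "z \<in> cball z0 1" for z \<tau>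
  proof -
    have "norm (snd (Fl \<tau> z)) \<le> sqrt (2 * (HH z - m))" by (rule vbound)
    also have "\<dots> \<le> Vm" unfolding Vm_def using Hm[OF that] by simp
    finally show ?thesis .
  qed
  have zz: "z0 \<in> cball z0 1" by simp
  have Vm0: "Vm \<ge> 0" using order_trans[OF norm_ge_zero vb[OF zz, of 0]] .
  define R where "R = norm z0 + 1 + Vm * T + Vm"
  have bndR: "norm (Fl \<tau> z) \<le> R" if z: "z \<in> cball z0 1" and tau: "\<bar>\<tau>\<bar> \<le> T" for z \<tau>
  proof -
    have "norm (fst (Fl \<tau> z) - fst z) \<le> sqrt (2 * (HH z - m)) * \<bar>\<tau>\<bar>" by (rule xbound)
    also have "\<dots> \<le> Vm * T" unfolding Vm_def using Hm[OF z] tau HH_ge[of z] by (intro mult_mono) auto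
    finally have x1: "norm (fst (Fl \<tau> z) - fst z) \<le> Vm * T" .
    have "norm (fst z) \<le> norm z" using norm_fst_le[of "fst z" "snd z"] by simp
    also have "\<dots> \<le> norm z0 + 1" using z norm_triangle_ineq2[of z z0] by (auto simp: dist_norm norm_minus_commute)
    finally have x2: "norm (fst z) \<le> norm z0 + 1" .
    have "norm (fst (Fl \<tau> z)) \<le> norm (fst z) + norm (fst (Fl \<tau> z) - fst z)"
      using norm_triangle_ineq[of "fst z" "fst (Fl \<tau> z) - fst z"] by simp
    then have x3: "norm (fst (Fl \<tau> z)) \<le> norm z0 + 1 + Vm * T" using x1 x2 by linarith
    have "norm (Fl \<tau> z) \<le> norm (fst (Fl \<tau> z)) + norm (snd (Fl \<tau> z))"
      using norm_Pair_le[of "fst (Fl \<tau> z)" "snd (Fl \<tau> z)"] by simp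
    then show ?thesis using x3 vb[OF z, of \<tau>] unfolding R_def by linarith
  qed
  obtain L where L: "L \<ge> 0" and lip: "\<forall>y1 y2. norm y1 \<le> R \<longrightarrow> norm y2 \<le> R \<longrightarrow> norm (FF y1 - FF y2) \<le> L * norm (y1 - y2)"
    using lipF[of R] by blast
  define K where "K = exp (L * T)"
  have K0: "K > 0" unfolding K_def by simp
  have ct: "continuous (at t0) (\<lambda>\<tau>. Fl \<tau> z0)" by (rule has_derivative_continuous[OF dFl'])
  show "continuous (at p0) (\<lambda>p. Fl (fst p) (snd p))"
    unfolding continuous_at_eps_delta
  proof (intro allI impI)
    fix e :: real assume e: "e > 0"
    obtain d1 where d1: "d1 > 0" "\<And>t. dist t t0 < d1 \<Longrightarrow> dist (Fl t z0) (Fl t0 z0) < e / 2"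
      using ct e unfolding continuous_at_eps_delta by (metis half_gt_zero)
    define d where "d = min (min d1 1) (e / (2 * K))"
    have d0: "d > 0" unfolding d_def using d1 e K0 by simp
    show "\<exists>d>0. \<forall>p. dist p p0 < d \<longrightarrow> dist (Fl (fst p) (snd p)) (Fl (fst p0) (snd p0)) < e"
    proof (intro exI[of _ d] conjI allI impI d0)
      fix p :: "real \<times> 'd state" assume dp: "dist p p0 < d"
      obtain t z where p: "p = (t, z)" by (cases p)
      have dt: "dist t t0 < d" using dp dist_fst_le[of p p0] by (simp add: p p0)
      have dz: "dist z z0 < d" using dp dist_snd_le[of p p0] by (simp add: p p0)
      have tT: "\<bar>t\<bar> \<le> T" using dt unfolding T_def d_def dist_real_def by linarith
      have zc: "z \<in> cball z0 1" using dz unfolding d_def by (simp add: dist_commute)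
      have z0c: "z0 \<in> cball z0 1" by simp
      have "norm (Fl t z - Fl t z0) \<le> norm (z - z0) * exp (L * \<bar>t\<bar>)"
        by (rule gronwall[OF L lip _ tT]) (use bndR zc z0c in blast)
      also have "\<dots> \<le> norm (z - z0) * K"
        unfolding K_def using tT L by (intro mult_left_mono) (auto intro: mult_left_mono)
      also have "\<dots> \<le> d * K" using dz K0 by (intro mult_right_mono) (auto simp: dist_norm)
      also have "\<dots> \<le> e / 2" unfolding d_def using K0 by (simp add: field_simps min_def)
      finally have a: "dist (Fl t z) (Fl t z0) \<le> e / 2" by (simp add: dist_norm)
      have b: "dist (Fl t z0) (Fl t0 z0) < e / 2" using d1(2) dt unfolding d_def by simp
      have "dist (Fl t z) (Fl t0 z0) < e" using dist_triangle[of "Fl t z" "Fl t0 z0" "Fl t z0"] a b by linarith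
      then show "dist (Fl (fst p) (snd p)) (Fl (fst p0) (snd p0)) < e" by (simp add: p p0)
    qed
  qed
qed

lemma Flm_ham: "(\<lambda>p. Fl (fst p) (snd p)) \<in> borel_measurable (borel \<Otimes>\<^sub>M borel)"
proof -
  have "(\<lambda>p. Fl (fst p) (snd p)) \<in> borel_measurable (borel :: (real \<times> 'd state) measure)"
    by (rule borel_measurable_continuous_onI[OF Fl_cont])
  then show ?thesis by (simp add: borel_prod)
qed

end

lemma vec_meas:
  assumes "\<And>i. (\<lambda>x. f x i) \<in> borel_measurable M"
  shows "(\<lambda>x. (\<chi> i. f x i) :: real^'d) \<in> borel_measurable M"
proof (rule borel_measurable_euclidean_space[THEN iffD2], intro ballI)
  fix b :: "real^'d" assume "b \<in> Basis"
  then obtain i and u :: real where u: "u \<in> Basis" and b0: "b = axis i u" unfolding Basis_vec_def by blast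
  have b: "b = axis i 1" using u b0 by simp
  show "(\<lambda>x. (\<chi> i. f x i) \<bullet> b) \<in> borel_measurable M"
  proof -
    have "(\<lambda>x. (\<chi> i. f x i) \<bullet> b) = (\<lambda>x. f x i)" by (simp add: b inner_axis fun_eq_iff)
    then show ?thesis using assms[of i] by simp
  qed
qed

lemma nth_meas[measurable]: "(\<lambda>x::real^'d. x $ i) \<in> borel_measurable borel"
proof -
  have "(\<lambda>x::real^'d. x \<bullet> axis i 1) \<in> borel_measurable borel" by measurable
  then show ?thesis by (simp add: inner_axis)
qed

lemma frac_meas[measurable]: "(frac :: real \<Rightarrow> real) \<in> borel_measurable borel"
  unfolding frac_def by measurable

lemma torus_meas: "(\<lambda>p. torus_flow (fst p) (snd p) :: ('d::finite) state) \<in> borel_measurable (borel \<Otimes>\<^sub>M borel)"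
proof -
  have c: "(\<lambda>p::real \<times> 'd state. (\<chi> i. frac (fst (snd p) $ i + fst p * snd (snd p) $ i)) :: real^'d) \<in> borel_measurable (borel \<Otimes>\<^sub>M borel)"
    by (rule vec_meas) measurable
  have "(\<lambda>p::real \<times> 'd state. ((\<chi> i. frac (fst (snd p) $ i + fst p * snd (snd p) $ i)) :: real^'d, snd (snd p))) \<in> borel_measurable (borel \<Otimes>\<^sub>M borel)"
    using c by measurable
  then show ?thesis unfolding torus_flow_def by simp
qed

lemma torus_box_meas: "(torus_box :: (real^'d) set) \<in> sets borel"
proof -
  have "torus_box = (\<Inter>i. {x::real^'d. 0 \<le> x $ i} \<inter> {x. x $ i < 1})" unfolding torus_box_def by auto
  also have "\<dots> \<in> sets borel" by measurable
  finally show ?thesis .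
qed

lemma coll_freq_meas:
  assumes bm[measurable]: "b \<in> borel_measurable borel"
  shows "(coll_freq \<gamma> b :: real^'d \<Rightarrow> real) \<in> borel_measurable borel"
proof -
  have h: "case_prod (\<lambda>(p::real^'d) (w::('d::finite) state). 1::ennreal) \<in> borel_measurable (borel \<Otimes>\<^sub>M borel)" by simp
  have "(\<lambda>v::real^'d. PsiF \<gamma> b (\<lambda>_. 1) (0::real^'d, v)) \<in> borel_measurable borel"
    by (rule PsiF_meas[OF bm h]) measurable
  then have "(\<lambda>v::real^'d. enn2real (PsiF \<gamma> b (\<lambda>_. 1) (0::real^'d, v))) \<in> borel_measurable borel" by measurable
  moreover have "coll_freq \<gamma> b = (\<lambda>v::real^'d. enn2real (PsiF \<gamma> b (\<lambda>_. 1) (0::real^'d, v)))"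
    by (simp add: fun_eq_iff coll_freq_def PsiF_def KM_def)
  ultimately show ?thesis by simp
qed

lemma setting_facts:
  fixes S :: "((real^'d) \<times> (real^'d)) set" and Fl :: "real \<Rightarrow> ('d::finite) state \<Rightarrow> 'd state"
    and H :: "'d state \<Rightarrow> real" and E0 :: real
  assumes ks: "kinetic_setting S Fl H"
  shows "(\<lambda>p. Fl (fst p) (snd p)) \<in> borel_measurable (borel \<Otimes>\<^sub>M borel)
      \<and> {z\<in>S. H z \<le> E0} \<in> sets borel
      \<and> (\<forall>z \<tau>. z \<in> {z\<in>S. H z \<le> E0} \<longrightarrow> Fl \<tau> z \<in> {z\<in>S. H z \<le> E0})
      \<and> (\<exists>V. \<forall>z. z \<in> {z\<in>S. H z \<le> E0} \<longrightarrow> norm (snd z) \<le> V)"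
  using ks unfolding kinetic_setting_def
proof (elim disjE conjE exE)
  assume S: "S = torus_box \<times> UNIV" and Fl: "Fl = torus_flow" and H: "H = (\<lambda>z. (norm (snd z))\<^sup>2 / 2)"
  have hm: "(\<lambda>z::'d state. (norm (snd z))\<^sup>2 / 2) \<in> borel_measurable borel" by measurable
  have tb[measurable]: "(torus_box :: (real^'d) set) \<in> sets borel" by (rule torus_box_meas)
  have Em: "{z\<in>S. H z \<le> E0} \<in> sets borel"
  proof -
    have "{z\<in>S. H z \<le> E0} = fst -` torus_box \<inter> {z. (norm (snd z))\<^sup>2 / 2 \<le> E0}" by (auto simp: S H)
    also have "\<dots> \<in> sets borel" by measurable
    finally show ?thesis .
  qed
  have inv: "Fl \<tau> z \<in> {z\<in>S. H z \<le> E0}" if "z \<in> {z\<in>S. H z \<le> E0}" for z \<tau>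
    using that by (auto simp: S H Fl torus_flow_def torus_box_def frac_lt_1)
  have V: "norm (snd z) \<le> sqrt (2 * E0)" if "z \<in> {z\<in>S. H z \<le> E0}" for z
    using that by (intro real_le_rsqrt) (auto simp: H)
  show ?thesis using torus_meas Em inv V unfolding Fl by blast
next
  fix \<Phi> :: "real^'d \<Rightarrow> real" and grad D2 mm
  assume S: "S = UNIV" and dPhi: "\<forall>x. (\<Phi> has_derivative (\<lambda>h. grad x \<bullet> h)) (at x)"
    and dgrad: "\<forall>x. (grad has_derivative blinfun_apply (D2 x)) (at x)"
    and cD2: "continuous_on UNIV D2" and mlow: "\<forall>x. mm \<le> \<Phi> x"
    and H: "H = (\<lambda>z. \<Phi> (fst z) + (norm (snd z))\<^sup>2 / 2)" and Fl0: "\<forall>z. Fl 0 z = z"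
    and dFl: "\<forall>z t. ((\<lambda>\<tau>. Fl \<tau> z) has_vector_derivative (snd (Fl t z), - grad (fst (Fl t z)))) (at t)"
  interpret ham \<Phi> grad D2 Fl mm
    by unfold_locales (use dPhi dgrad cD2 mlow Fl0 dFl in auto)
  have HH: "H = HH" by (simp add: H HH_def[abs_def])
  have Em: "{z\<in>S. H z \<le> E0} \<in> sets borel"
  proof -
    have "HH \<in> borel_measurable borel" by (rule borel_measurable_continuous_onI[OF HH_cont])
    then have "{z. HH z \<le> E0} \<in> sets borel" by measurable
    then show ?thesis by (simp add: S HH)
  qed
  have inv: "Fl \<tau> z \<in> {z\<in>S. H z \<le> E0}" if "z \<in> {z\<in>S. H z \<le> E0}" for z \<tau>
    using that energy[of \<tau> z] by (simp add: S HH)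
  have V: "norm (snd z) \<le> sqrt (2 * (E0 - mm))" if "z \<in> {z\<in>S. H z \<le> E0}" for z
  proof -
    have "(norm (snd z))\<^sup>2 / 2 \<le> E0 - mm" using that mlow[rule_format, of "fst z"] by (simp add: H)
    then show ?thesis by (intro real_le_rsqrt) simp
  qed
  show ?thesis using Flm_ham Em inv V by blast
qed

theorem mainTheorem12:
  fixes S :: "((real^'d) \<times> (real^'d)) set"
    and Fl :: "real \<Rightarrow> (real^'d) \<times> (real^'d) \<Rightarrow> (real^'d) \<times> (real^'d)"
    and H :: "(real^'d) \<times> (real^'d) \<Rightarrow> real"
    and \<gamma> E0 :: real and b :: "real \<Rightarrow> real"
  assumes "kinetic_setting S Fl H"
    and "\<gamma> \<ge> 0"
    and "\<forall>s. 0 \<le> b s" and "b \<in> borel_measurable borel"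
    and "\<forall>e::real^'d. norm e = 1 \<longrightarrow> integrable sphere_measure (\<lambda>\<sigma>. b (\<sigma> \<bullet> e))"
    and "E0 > 0"
  shows "\<exists>C1>0. \<forall>x0 v0 f. (x0, v0) \<in> S \<and> H (x0, v0) \<le> E0
            \<and> mild_solution Fl \<gamma> b (return borel (x0, v0)) f \<longrightarrow>
          (\<forall>t\<ge>0. \<forall>A\<in>sets borel.
             ennreal (exp (- t * C1)) *
               (\<integral>\<^sup>+ s. (\<integral>\<^sup>+ r.
                   emeasure (transport Fl (t - s) (restr {z\<in>S. H z \<le> E0} (gain \<gamma> b
                     (transport Fl (s - r) (restr {z\<in>S. H z \<le> E0} (gain \<gamma> b
                       (transport Fl r (restr {z\<in>S. H z \<le> E0} (return borel (x0, v0)))))))))) A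
                   * indicator {0..s} r \<partial>lborel) * indicator {0..t} s \<partial>lborel)
             \<le> emeasure (f t) A)"
proof -
  define E where "E = {z\<in>S. H z \<le> E0}"
  have facts: "(\<lambda>p. Fl (fst p) (snd p)) \<in> borel_measurable (borel \<Otimes>\<^sub>M borel)
      \<and> E \<in> sets borel \<and> (\<forall>z \<tau>. z \<in> E \<longrightarrow> Fl \<tau> z \<in> E)
      \<and> (\<exists>V. \<forall>z. z \<in> E \<longrightarrow> norm (snd z) \<le> V)"
    unfolding E_def by (rule setting_facts[OF assms(1)])
  then obtain V where V: "\<And>z. z \<in> E \<Longrightarrow> norm (snd z) \<le> V" by blast
  obtain C where C: "C > 0" "\<And>v::real^'d. norm v \<le> V \<Longrightarrow> coll_freq \<gamma> b v \<le> C"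
    using kappa_bound[OF assms(2,3,4,5), of V] by blast
  interpret gen \<gamma> b Fl E C
  proof
    show "b \<in> borel_measurable borel" by (rule assms(4))
    show "(\<lambda>p. Fl (fst p) (snd p)) \<in> borel_measurable (borel \<Otimes>\<^sub>M borel)" using facts by blast
    show "E \<in> sets borel" using facts by blast
    show "\<And>z \<tau>. z \<in> E \<Longrightarrow> Fl \<tau> z \<in> E" using facts by blast
    show "(coll_freq \<gamma> b :: real^'d \<Rightarrow> real) \<in> borel_measurable borel" by (rule coll_freq_meas[OF assms(4)])
    show "\<And>z. z \<in> E \<Longrightarrow> coll_freq \<gamma> b (snd z) \<le> C" using C(2) V by blast
    show "C > 0" by (rule C(1))
  qed
  show ?thesis
  proof (intro exI[of _ C] conjI allI impI ballI C(1))
    fix x0 v0 :: "real^'d" and f :: "real \<Rightarrow> 'd state measure" and t :: real and A :: "'d state set"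
    assume h: "(x0, v0) \<in> S \<and> H (x0, v0) \<le> E0 \<and> mild_solution Fl \<gamma> b (return borel (x0, v0)) f"
      and t: "0 \<le> t" and A: "A \<in> sets borel"
    have z0: "(x0, v0) \<in> E" using h unfolding E_def by simp
    have mild: "mild_solution Fl \<gamma> b (return borel (x0, v0)) f" using h by blast
    have g: "ennreal (exp (- t * C)) *
           (\<integral>\<^sup>+ s. (\<integral>\<^sup>+ r. emeasure (transport Fl (t - s) (restr E (gain \<gamma> b (XX (x0, v0) s r)))) A
                   * indicator {0..s} r \<partial>lborel) * indicator {0..t} s \<partial>lborel)
         \<le> emeasure (f t) A" by (rule gen_main[OF z0 mild t A])
    show "ennreal (exp (- t * C)) *
               (\<integral>\<^sup>+ s. (\<integral>\<^sup>+ r.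
                   emeasure (transport Fl (t - s) (restr {z\<in>S. H z \<le> E0} (gain \<gamma> b
                     (transport Fl (s - r) (restr {z\<in>S. H z \<le> E0} (gain \<gamma> b
                       (transport Fl r (restr {z\<in>S. H z \<le> E0} (return borel (x0, v0)))))))))) A
                   * indicator {0..s} r \<partial>lborel) * indicator {0..t} s \<partial>lborel)
             \<le> emeasure (f t) A"
      using g[unfolded XX_def] unfolding E_def .
  qed
qed

end
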